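(* Under the hypotheses and notation below, $$S^+(z;x,y;t):=\sum_{k>0}S^{[k]}(x,y;t)z^k=\frac{zx}{(1-zx)K(x,y)}\sqrt{\frac{\Delta(\bar x)}{\Delta(z)}}=\frac{zx\,S_0(z;t)\,S(x,y;t)}{(1-zx)\sqrt{D(t)}}.$$
   Context: $\mathcal H=\{(k,0):k\le0\}$; $A\subset\mathbb{Z}^2$ finite, symmetric ($(i,j)\in A\Rightarrow(i,-j)\in A$), with small height variations ($|j|\le1$), $A_1\ne0$, and reversal-symmetric ($(i,j)\in A\Rightarrow(-i,-j)\in A$). $a^{[k]}_{i,j}(n)$ is the number of walks $(w_0,\dots,w_n)$ with steps in $A$, $w_0=(k,0)$, $w_n=(i,j)$, $w_m\notin\mathcal H$ for $1\le m\le n$; $S^{[k]}(x,y;t)=\sum a^{[k]}_{i,j}(n)x^iy^jt^n$; $S=S^{[0]}$ and $S_0(x;t)=\sum_{n,i}a^{[0]}_{i,0}(n)x^it^n$. $\bar x=1/x$, $\bar y=1/y$, $A_0(x)=\sum_{(i,0)\in A}x^i$, $A_1(x)=\sum_{(i,1)\in A}x^i$, $K(x,y)=1-tA_0(x)-t(y+\bar y)A_1(x)$, $\delta(x)=(1-tA_0(x))^2-4t^2A_1(x)^2$, and $(D,\Delta(x),\bar\Delta(\bar x))$ its canonical factorization (unique power series in $t$ with $\delta=D\Delta(x)\bar\Delta(\bar x)$, $D$ real coefficients, $\Delta(x)$ coefficients in $\mathbb{R}[x]$, $\bar\Delta$ in $\mathbb{R}[\bar x]$, $D(0)=\Delta(0;t)=\bar\Delta(0;t)=\Delta(x;0)=\bar\Delta(\bar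 x;0)=1$); here $\bar\Delta(\bar x)=\Delta(\bar x)$. Square roots have constant term $1$. *)

theory Defs
  imports "HOL-Computational_Algebra.Computational_Algebra"
begin

definition Hline :: "(int \<times> int) set" where
  "Hline = {(k, 0) | k. k \<le> 0}"

definition walk_pos :: "int \<Rightarrow> (int \<times> int) list \<Rightarrow> nat \<Rightarrow> int \<times> int" where
  "walk_pos k ss m = (k + (\<Sum>l<m. fst (ss ! l)), (\<Sum>l<m. snd (ss ! l)))"

text \<open>Walks of length n with steps in A from (k,0), avoiding H at times 1..n
  (a walk (w_0,...,w_n) is identified with its list of steps).\<close>
definition walks :: "(int \<times> int) set \<Rightarrow> int \<Rightarrow> nat \<Rightarrow> (int \<times> int) list set" where
  "walks A k n = {ss. length ss = n \<and> set ss \<subseteq> A \<and>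
                      (\<forall>m\<in>{1..n}. walk_pos k ss m \<notin> Hline)}"

definition acount :: "(int \<times> int) set \<Rightarrow> int \<Rightarrow> int \<Rightarrow> int \<Rightarrow> nat \<Rightarrow> nat" where
  "acount A k i j n = card {ss \<in> walks A k n. walk_pos k ss n = (i, j)}"

definition endpoints :: "(int \<times> int) set \<Rightarrow> int \<Rightarrow> nat \<Rightarrow> (int \<times> int) set" where
  "endpoints A k n = (\<lambda>ss. walk_pos k ss n) ` walks A k n"

text \<open>Coefficient of t^n in S^[k](X,Y;t), a Laurent polynomial evaluated in a field.\<close>
definition Scoef :: "(int \<times> int) set \<Rightarrow> int \<Rightarrow> nat \<Rightarrow> 'a::field \<Rightarrow> 'a \<Rightarrow> 'a" where
  "Scoef A k n X Y = (\<Sum>(i, j)\<in>endpoints A k n. of_nat (acount A k i j n) * X powi i * Y powi j)"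

text \<open>Coefficient of t^n in S_0(X;t).\<close>
definition S0coef :: "(int \<times> int) set \<Rightarrow> nat \<Rightarrow> 'a::field \<Rightarrow> 'a" where
  "S0coef A n X = (\<Sum>i\<in>{i. (i, 0) \<in> endpoints A 0 n}. of_nat (acount A 0 i 0 n) * X powi i)"

definition A0 :: "(int \<times> int) set \<Rightarrow> 'a::field \<Rightarrow> 'a" where
  "A0 A X = (\<Sum>i\<in>{i. (i, 0) \<in> A}. X powi i)"

definition A1 :: "(int \<times> int) set \<Rightarrow> 'a::field \<Rightarrow> 'a" where
  "A1 A X = (\<Sum>i\<in>{i. (i, 1) \<in> A}. X powi i)"

section \<open>The coefficient ring: Laurent series in z over Laurent series in x over Laurent series in y\<close>

type_synonym R = "real fls fls fls"

definition zR :: R where "zR = fls_X"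
definition xM :: "real fls fls" where "xM = fls_X"
definition yM :: "real fls fls" where "yM = fls_const fls_X"
definition xR :: R where "xR = fls_const xM"
definition yR :: R where "yR = fls_const yM"
definition cR :: "real \<Rightarrow> R" where "cR c = fls_const (fls_const (fls_const c))"

definition pev :: "real poly \<Rightarrow> R \<Rightarrow> R" where
  "pev p X = (\<Sum>i\<le>degree p. cR (coeff p i) * X ^ i)"

definition fev :: "real poly fps \<Rightarrow> R \<Rightarrow> R fps" where
  "fev F X = Abs_fps (\<lambda>n. pev (fps_nth F n) X)"

definition liftR :: "real fps \<Rightarrow> R fps" where
  "liftR f = Abs_fps (\<lambda>n. cR (fps_nth f n))"

definition fps_sqrt1 :: "R fps \<Rightarrow> R fps" where
  "fps_sqrt1 f = (THE g. g ^ 2 = f \<and> fps_nth g 0 = 1)"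

definition Sk :: "(int \<times> int) set \<Rightarrow> int \<Rightarrow> R fps" where
  "Sk A k = Abs_fps (\<lambda>n. Scoef A k n xR yR)"

text \<open>S^+(z;x,y;t) = sum_{k>0} S^[k](x,y;t) z^k, built coefficientwise in t
  (each t^n-coefficient is a power series in z with Laurent-polynomial coefficients in x,y).\<close>
definition Splus :: "(int \<times> int) set \<Rightarrow> R fps" where
  "Splus A = Abs_fps (\<lambda>n. fps_to_fls
      (Abs_fps (\<lambda>k. if k = 0 then 0 else Scoef A (int k) n xM yM)))"

definition S0z :: "(int \<times> int) set \<Rightarrow> R fps" where
  "S0z A = Abs_fps (\<lambda>n. S0coef A n zR)"

definition Kxy :: "(int \<times> int) set \<Rightarrow> R fps" where
  "Kxy A = 1 - fps_X * fps_const (A0 A xR) - fps_X * fps_const ((yR + inverse yR) * A1 A xR)"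

definition deltax :: "(int \<times> int) set \<Rightarrow> R fps" where
  "deltax A = (1 - fps_X * fps_const (A0 A xR))^2 - 4 * fps_X^2 * fps_const (A1 A xR)^2"

text \<open>Canonical factorization (D, Delta(x), Deltabar(xbar)) of delta(x).
  Delta and Deltabar are power series in t with coefficients in R[x]; Deltabar is
  evaluated at xbar = 1/x.\<close>
definition canon_fact :: "(int \<times> int) set \<Rightarrow> real fps \<Rightarrow> real poly fps \<Rightarrow> real poly fps \<Rightarrow> bool" where
  "canon_fact A D Del Delb \<longleftrightarrow>
     deltax A = liftR D * fev Del xR * fev Delb (inverse xR) \<and>
     fps_nth D 0 = 1 \<and>
     (\<forall>n. poly (fps_nth Del n) 0 = (if n = 0 then 1 else 0)) \<and>
     (\<forall>n. poly (fps_nth Delb n) 0 = (if n = 0 then 1 else 0)) \<and>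
     fps_nth Del 0 = 1 \<and> fps_nth Delb 0 = 1"

end

theory Submission
  imports Defs
begin

unbundle fps_syntax


definition mc :: "R \<Rightarrow> int \<Rightarrow> int \<Rightarrow> int \<Rightarrow> real" where
  "mc r k i j = r $$ k $$ i $$ j"

lemma mc_eqI: "(\<And>k i j. mc r k i j = mc s k i j) \<Longrightarrow> r = s"
  unfolding mc_def by (intro fls_eqI) auto

lemma mc_add[simp]: "mc (r + s) k i j = mc r k i j + mc s k i j"
  and mc_diff[simp]: "mc (r - s) k i j = mc r k i j - mc s k i j"
  and mc_uminus[simp]: "mc (- r) k i j = - mc r k i j"
  and mc_zero[simp]: "mc 0 k i j = 0"
  by (simp_all add: mc_def)

lemma mc_sum: "mc (\<Sum>e\<in>E. f e) k i j = (\<Sum>e\<in>E. mc (f e) k i j)"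
  by (simp add: mc_def fls_nth_sum)

lemma fls_const_add': "fls_const (a + b) = fls_const a + fls_const (b::'a::monoid_add)"
  by (intro fls_eqI) simp

lemma cR_add: "cR (a + b) = cR a + cR b"
  by (simp add: cR_def fls_const_add')
lemma cR_mult: "cR (a * b) = cR a * cR b"
  by (simp add: cR_def)
lemma cR_0[simp]: "cR 0 = 0" and cR_1[simp]: "cR 1 = 1"
  by (simp_all add: cR_def)
lemma cR_sum: "cR (\<Sum>e\<in>E. f e) = (\<Sum>e\<in>E. cR (f e))"
  by (induction E rule: infinite_finite_induct) (auto simp: cR_add)
lemma cR_uminus: "cR (- a) = - cR a"
  by (simp add: cR_def)
lemma cR_diff: "cR (a - b) = cR a - cR b"
  using cR_add[of a "-b"] by (simp add: cR_uminus)

lemma mc_cR_mult[simp]: "mc (cR w * r) k i j = w * mc r k i j"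
  by (simp add: mc_def cR_def)

lemma mc_one: "mc 1 k i j = (if k = 0 \<and> i = 0 \<and> j = 0 then 1 else 0)"
  by (simp add: mc_def)

definition mon :: "int \<Rightarrow> int \<Rightarrow> int \<Rightarrow> R" where
  "mon k i j = zR powi k * xR powi i * yR powi j"

lemma mon_alt: "mon k i j = fls_X_intpow k * fls_const (fls_X_intpow i * fls_const (fls_X_intpow j))"
  by (simp add: mon_def zR_def xR_def yR_def xM_def yM_def fls_const_power_int[symmetric])

lemma mc_mon_mult: "mc (mon k' i' j' * r) k i j = mc r (k - k') (i - i') (j - j')"
  unfolding mon_alt mc_def
  by (simp add: fls_X_intpow_times_conv_shift fls_shifted_times_simps mult.assoc)

lemma mc_mon: "mc (mon k' i' j') k i j = (if k = k' \<and> i = i' \<and> j = j' then 1 else 0)"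
  using mc_mon_mult[of k' i' j' 1 k i j] by (simp add: mc_one)

lemma mon_mult: "mon k i j * mon k' i' j' = mon (k + k') (i + i') (j + j')"
  by (rule mc_eqI) (simp add: mc_mon_mult mc_mon)

lemma mon_0[simp]: "mon 0 0 0 = 1"
  by (rule mc_eqI) (simp add: mc_mon mc_one)

lemma xR_pow: "xR ^ n = mon 0 (int n) 0" and yR_pow: "yR ^ n = mon 0 0 (int n)"
  and zR_pow: "zR ^ n = mon (int n) 0 0"
  by (simp_all add: mon_def)

lemma xR_powi: "xR powi n = mon 0 n 0" and yR_powi: "yR powi n = mon 0 0 n"
  and zR_powi: "zR powi n = mon n 0 0"
  by (simp_all add: mon_def)

lemma mon_ne0: "mon k i j \<noteq> 0"
proof
  assume "mon k i j = 0"
  then have "mc (mon k i j) k i j = 0" by simp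
  then show False by (simp add: mc_mon)
qed

lemma xR_ne0: "xR \<noteq> 0" and yR_ne0: "yR \<noteq> 0" and zR_ne0: "zR \<noteq> 0"
  using mon_ne0[of 0 1 0] mon_ne0[of 0 0 1] mon_ne0[of 1 0 0] by (simp_all add: mon_def)

lemma inverse_mon: "inverse (mon k i j) = mon (-k) (-i) (-j)"
  using mon_mult[of k i j "-k" "-i" "-j"] mon_ne0[of k i j]
  by (simp add: inverse_unique)

lemma inverse_xR: "inverse xR = mon 0 (-1) 0" and inverse_yR: "inverse yR = mon 0 0 (-1)"
  using inverse_mon[of 0 1 0] inverse_mon[of 0 0 1] by (simp_all add: mon_def)

lemma mc_sum_mon:
  assumes "finite E"
  shows "mc (\<Sum>e\<in>E. cR (w e) * mon (fk e) (fi e) (fj e)) k i j =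
         (\<Sum>e\<in>{e\<in>E. fk e = k \<and> fi e = i \<and> fj e = j}. w e)"
proof -
  have "mc (\<Sum>e\<in>E. cR (w e) * mon (fk e) (fi e) (fj e)) k i j =
     (\<Sum>e\<in>E. if fk e = k \<and> fi e = i \<and> fj e = j then w e else 0)"
    by (simp add: mc_sum mc_mon eq_commute[of k] eq_commute[of i] eq_commute[of j] cong: conj_cong)
      (rule sum.cong, auto)
  also have "\<dots> = (\<Sum>e\<in>{e\<in>E. fk e = k \<and> fi e = i \<and> fj e = j}. w e)"
    using assms by (simp add: sum.inter_filter)
  finally show ?thesis .
qed


lemma fls_times_ex1:
  fixes p q :: "'a::comm_ring_1 fls"
  assumes "(p * q) $$ j \<noteq> 0" shows "\<exists>m. p $$ m * q $$ (j - m) \<noteq> 0"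
proof (rule ccontr)
  assume "\<not> ?thesis"
  then have "(p * q) $$ j = 0" by (simp add: fls_times_nth(2))
  with assms show False by simp
qed

lemma fls_times_ex2:
  fixes u v :: "'a::comm_ring_1 fls fls"
  assumes "(u * v) $$ i $$ j \<noteq> 0" shows "\<exists>m. (u $$ m * v $$ (i - m)) $$ j \<noteq> 0"
proof (rule ccontr)
  assume "\<not> ?thesis"
  then have "(u * v) $$ i $$ j = 0" by (simp add: fls_times_nth(2) fls_nth_sum)
  with assms show False by simp
qed

lemma fls_times_ex3:
  fixes r s :: "'a::comm_ring_1 fls fls fls"
  assumes "(r * s) $$ k $$ i $$ j \<noteq> 0" shows "\<exists>m. (r $$ m * s $$ (k - m)) $$ i $$ j \<noteq> 0"
proof (rule ccontr)
  assume "\<not> ?thesis"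
  then have "(r * s) $$ k $$ i $$ j = 0" by (simp add: fls_times_nth(2) fls_nth_sum)
  with assms show False by simp
qed

lemma mc_mult_ex:
  assumes "mc (r * s) k i j \<noteq> 0"
  shows "\<exists>k1 i1 j1. mc r k1 i1 j1 \<noteq> 0 \<and> mc s (k - k1) (i - i1) (j - j1) \<noteq> 0"
proof -
  from fls_times_ex3[of r s k i j] assms obtain k1 where
    1: "(r $$ k1 * s $$ (k - k1)) $$ i $$ j \<noteq> 0" by (auto simp: mc_def)
  from fls_times_ex2[OF 1] obtain i1 where
    2: "(r $$ k1 $$ i1 * s $$ (k - k1) $$ (i - i1)) $$ j \<noteq> 0" by auto
  from fls_times_ex1[OF 2] obtain j1 where
    "r $$ k1 $$ i1 $$ j1 * s $$ (k - k1) $$ (i - i1) $$ (j - j1) \<noteq> 0" by auto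
  then show ?thesis unfolding mc_def by auto
qed

definition spR :: "R \<Rightarrow> (int \<Rightarrow> int \<Rightarrow> int \<Rightarrow> bool) \<Rightarrow> bool" where
  "spR r P \<longleftrightarrow> (\<forall>k i j. mc r k i j \<noteq> 0 \<longrightarrow> P k i j)"

definition psum :: "(int \<Rightarrow> int \<Rightarrow> int \<Rightarrow> bool) \<Rightarrow> (int \<Rightarrow> int \<Rightarrow> int \<Rightarrow> bool) \<Rightarrow> int \<Rightarrow> int \<Rightarrow> int \<Rightarrow> bool" where
  "psum P Q k i j \<longleftrightarrow> (\<exists>k1 i1 j1. P k1 i1 j1 \<and> Q (k - k1) (i - i1) (j - j1))"

lemma spR_mult:
  assumes "spR r P" "spR s Q" shows "spR (r * s) (psum P Q)"
  unfolding spR_def psum_def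
proof (intro allI impI)
  fix k i j assume "mc (r * s) k i j \<noteq> 0"
  then obtain k1 i1 j1 where "mc r k1 i1 j1 \<noteq> 0" "mc s (k - k1) (i - i1) (j - j1) \<noteq> 0"
    using mc_mult_ex by blast
  then show "\<exists>k1 i1 j1. P k1 i1 j1 \<and> Q (k - k1) (i - i1) (j - j1)"
    using assms unfolding spR_def by blast
qed

lemma spR_mono: "spR r P \<Longrightarrow> (\<And>k i j. P k i j \<Longrightarrow> Q k i j) \<Longrightarrow> spR r Q"
  unfolding spR_def by blast

lemma spR_add: "spR r P \<Longrightarrow> spR s P \<Longrightarrow> spR (r + s) P"
  unfolding spR_def by (metis add.right_neutral mc_add)

lemma spR_diff: "spR r P \<Longrightarrow> spR s P \<Longrightarrow> spR (r - s) P"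
  unfolding spR_def by (metis diff_zero mc_diff)

lemma spR_uminus: "spR r P \<Longrightarrow> spR (- r) P"
  unfolding spR_def by simp

lemma spR_0[simp]: "spR 0 P"
  unfolding spR_def by simp

lemma spR_sum: "(\<And>e. e \<in> E \<Longrightarrow> spR (f e) P) \<Longrightarrow> spR (\<Sum>e\<in>E. f e) P"
  by (induction E rule: infinite_finite_induct) (auto intro: spR_add)

lemma spR_cR_mult: "spR r P \<Longrightarrow> spR (cR w * r) P"
  unfolding spR_def by simp

lemma spR_mon: "spR (mon k i j) (\<lambda>k' i' j'. k' = k \<and> i' = i \<and> j' = j)"
  unfolding spR_def by (simp add: mc_mon)

lemma spR_1: "spR 1 (\<lambda>k i j. k = 0 \<and> i = 0 \<and> j = 0)"
  unfolding spR_def by (simp add: mc_one)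

lemma spR_cR: "spR (cR w) (\<lambda>k i j. k = 0 \<and> i = 0 \<and> j = 0)"
  using spR_cR_mult[OF spR_1, of w] by simp

definition spF :: "R fps \<Rightarrow> (nat \<Rightarrow> int \<Rightarrow> int \<Rightarrow> int \<Rightarrow> bool) \<Rightarrow> bool" where
  "spF F P \<longleftrightarrow> (\<forall>n. spR (F $ n) (P n))"

definition fsum :: "(nat \<Rightarrow> int \<Rightarrow> int \<Rightarrow> int \<Rightarrow> bool) \<Rightarrow> (nat \<Rightarrow> int \<Rightarrow> int \<Rightarrow> int \<Rightarrow> bool) \<Rightarrow> nat \<Rightarrow> int \<Rightarrow> int \<Rightarrow> int \<Rightarrow> bool" where
  "fsum P Q n k i j \<longleftrightarrow> (\<exists>m\<le>n. psum (P m) (Q (n - m)) k i j)"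

lemma spF_mult: "spF F P \<Longrightarrow> spF G Q \<Longrightarrow> spF (F * G) (fsum P Q)"
  unfolding spF_def fps_mult_nth
proof (intro allI spR_sum)
  fix n m :: nat assume "\<forall>n. spR (F $ n) (P n)" "\<forall>n. spR (G $ n) (Q n)" "m \<in> {0..n}"
  then show "spR (F $ m * G $ (n - m)) (fsum P Q n)"
    by (auto simp: fsum_def intro!: spR_mono[OF spR_mult])
qed

lemma spF_mono: "spF F P \<Longrightarrow> (\<And>n k i j. P n k i j \<Longrightarrow> Q n k i j) \<Longrightarrow> spF F Q"
  unfolding spF_def using spR_mono by blast

lemma spF_add: "spF F P \<Longrightarrow> spF G P \<Longrightarrow> spF (F + G) P"
  unfolding spF_def by (simp add: spR_add)

lemma spF_diff: "spF F P \<Longrightarrow> spF G P \<Longrightarrow> spF (F - G) P"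
  unfolding spF_def by (simp add: spR_diff)

lemma spF_const: "spR r P \<Longrightarrow> spF (fps_const r) (\<lambda>n k i j. n = 0 \<and> P k i j)"
  unfolding spF_def spR_def by auto

lemma spF_1: "spF 1 (\<lambda>n k i j. n = 0 \<and> k = 0 \<and> i = 0 \<and> j = 0)"
  using spF_const[OF spR_1] by simp


lemma cR_eq0_iff: "cR c = 0 \<longleftrightarrow> c = 0"
  by (simp add: cR_def)

lemma map_cR_add: "map_poly cR (p + q) = map_poly cR p + map_poly cR q"
  by (rule poly_eqI) (simp add: coeff_map_poly cR_add)
lemma map_cR_mult: "map_poly cR (p * q) = map_poly cR p * map_poly cR q"
  by (rule poly_eqI) (simp add: coeff_map_poly coeff_mult cR_sum cR_mult)
lemma map_cR_uminus: "map_poly cR (- p) = - map_poly cR p"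
  by (rule poly_eqI) (simp add: coeff_map_poly cR_uminus)
lemma map_cR_diff: "map_poly cR (p - q) = map_poly cR p - map_poly cR q"
  by (rule poly_eqI) (simp add: coeff_map_poly cR_diff)

lemma pev_poly: "pev p X = poly (map_poly cR p) X"
  unfolding pev_def poly_altdef
  by (simp add: degree_map_poly cR_eq0_iff coeff_map_poly)

lemma pev_mult: "pev (p * q) X = pev p X * pev q X"
  by (simp add: pev_poly map_cR_mult)
lemma pev_add: "pev (p + q) X = pev p X + pev q X"
  by (simp add: pev_poly map_cR_add)
lemma pev_diff: "pev (p - q) X = pev p X - pev q X"
  by (simp add: pev_poly map_cR_diff)
lemma pev_1[simp]: "pev 1 X = 1"
  by (simp add: pev_poly)
lemma pev_0[simp]: "pev 0 X = 0"
  by (simp add: pev_poly)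
lemma pev_const[simp]: "pev [:c:] X = cR c"
  by (simp add: pev_def)
lemma pev_sum: "pev (\<Sum>e\<in>E. f e) X = (\<Sum>e\<in>E. pev (f e) X)"
  by (induction E rule: infinite_finite_induct) (auto simp: pev_add)

definition mapf :: "('a \<Rightarrow> 'b) \<Rightarrow> 'a fps \<Rightarrow> 'b fps" where
  "mapf \<phi> F = Abs_fps (\<lambda>n. \<phi> (F $ n))"

lemma mapf_nth[simp]: "mapf \<phi> F $ n = \<phi> (F $ n)"
  by (simp add: mapf_def)

lemma mapf_mult:
  fixes \<phi> :: "'a::comm_ring_1 \<Rightarrow> 'b::comm_ring_1"
  assumes add: "\<And>a b. \<phi> (a + b) = \<phi> a + \<phi> b" and mult: "\<And>a b. \<phi> (a * b) = \<phi> a * \<phi> b"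
    and z: "\<phi> 0 = 0"
  shows "mapf \<phi> (F * G) = mapf \<phi> F * mapf \<phi> G"
proof -
  have s: "\<phi> (sum f E) = (\<Sum>e\<in>E. \<phi> (f e))" for f and E :: "nat set"
    by (induction E rule: infinite_finite_induct) (auto simp: add z)
  show ?thesis by (rule fps_ext) (simp add: fps_mult_nth s mult)
qed

lemma mapf_add:
  assumes add: "\<And>a b. \<phi> (a + b) = \<phi> a + \<phi> b"
  shows "mapf \<phi> (F + G) = mapf \<phi> F + mapf \<phi> G"
  by (rule fps_ext) (simp add: add)

lemma mapf_diff:
  assumes add: "\<And>a b. \<phi> (a - b) = \<phi> a - \<phi> b"
  shows "mapf \<phi> (F - G) = mapf \<phi> F - mapf \<phi> G"
  by (rule fps_ext) (simp add: add)

lemma mapf_one: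
  assumes "\<phi> 1 = 1" "\<phi> 0 = 0"
  shows "mapf \<phi> 1 = 1"
  by (rule fps_ext) (simp add: assms)

lemma mapf_X:
  assumes "\<phi> 1 = 1" "\<phi> 0 = 0"
  shows "mapf \<phi> fps_X = fps_X"
  by (rule fps_ext) (simp add: assms fps_X_def)

lemma fev_mapf: "fev F X = mapf (\<lambda>p. pev p X) F"
  by (simp add: fev_def mapf_def)
lemma liftR_mapf: "liftR f = mapf cR f"
  by (simp add: liftR_def mapf_def)

lemma fev_mult: "fev (F * G) X = fev F X * fev G X"
  unfolding fev_mapf by (rule mapf_mult) (simp_all add: pev_add pev_mult)
lemma fev_add: "fev (F + G) X = fev F X + fev G X"
  unfolding fev_mapf by (rule mapf_add) (simp_all add: pev_add)
lemma fev_diff: "fev (F - G) X = fev F X - fev G X"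
  unfolding fev_mapf by (rule mapf_diff) (simp_all add: pev_diff)
lemma fev_1[simp]: "fev 1 X = 1"
  unfolding fev_mapf by (rule mapf_one) simp_all
lemma fev_nth[simp]: "fev F X $ n = pev (F $ n) X"
  by (simp add: fev_def)

lemma liftR_mult: "liftR (F * G) = liftR F * liftR G"
  unfolding liftR_mapf by (rule mapf_mult) (simp_all add: cR_add cR_mult)
lemma liftR_1[simp]: "liftR 1 = 1"
  unfolding liftR_mapf by (rule mapf_one) simp_all
lemma liftR_nth[simp]: "liftR F $ n = cR (F $ n)"
  by (simp add: liftR_def)

lemma liftR_fev: "liftR F = fev (mapf (\<lambda>c. [:c:]) F) X"
  by (rule fps_ext) simp

lemma pev_mon_sum:
  assumes "\<And>m. X ^ m = mon (fk m) (fi m) (fj m)"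
  shows "pev p X = (\<Sum>m\<in>{..degree p}. cR (coeff p m) * mon (fk m) (fi m) (fj m))"
  unfolding pev_def assms by simp

lemma coeff_nat_cases:
  "(\<Sum>m\<in>{m\<in>{..degree p}. int m = i}. coeff p m) = (if 0 \<le> i then coeff p (nat i) else 0)"
proof (cases "0 \<le> i \<and> nat i \<le> degree p")
  case True
  then have "{m\<in>{..degree p}. int m = i} = {nat i}" by auto
  then show ?thesis using True by simp
next
  case False
  then have e: "{m\<in>{..degree p}. int m = i} = {}" by auto
  have "0 \<le> i \<Longrightarrow> coeff p (nat i) = 0" using False by (simp add: coeff_eq_0)
  then show ?thesis by (subst e) simp
qed

lemma mc_pev_x: "mc (pev p xR) k i j = (if k = 0 \<and> j = 0 \<and> 0 \<le> i then coeff p (nat i) else 0)"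
proof -
  have "mc (pev p xR) k i j = (\<Sum>m\<in>{m\<in>{..degree p}. 0 = k \<and> int m = i \<and> 0 = j}. coeff p m)"
    by (subst pev_mon_sum[of _ "\<lambda>_. 0" int "\<lambda>_. 0"]) (simp_all add: xR_pow mc_sum_mon)
  also have "\<dots> = (if k = 0 \<and> j = 0 then (\<Sum>m\<in>{m\<in>{..degree p}. int m = i}. coeff p m) else 0)"
    by auto
  finally show ?thesis using coeff_nat_cases[of p i] by simp
qed

lemma mon_pow: "mon k i j ^ m = mon (int m * k) (int m * i) (int m * j)"
  by (induction m) (simp_all add: mon_mult algebra_simps)

lemma xb_pow: "inverse xR ^ m = mon 0 (- int m) 0"
  by (simp add: inverse_xR mon_pow)

lemma mc_pev_xb: "mc (pev p (inverse xR)) k i j = (if k = 0 \<and> j = 0 \<and> i \<le> 0 then coeff p (nat (- i)) else 0)"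
proof -
  have "mc (pev p (inverse xR)) k i j = (\<Sum>m\<in>{m\<in>{..degree p}. 0 = k \<and> - int m = i \<and> 0 = j}. coeff p m)"
    by (subst pev_mon_sum[of _ "\<lambda>_. 0" "\<lambda>m. - int m" "\<lambda>_. 0"]) (simp_all add: xb_pow mc_sum_mon)
  also have "\<dots> = (if k = 0 \<and> j = 0 then (\<Sum>m\<in>{m\<in>{..degree p}. int m = - i}. coeff p m) else 0)"
    by (auto intro!: sum.cong)
  finally show ?thesis using coeff_nat_cases[of p "- i"] by simp
qed

lemma mc_pev_z: "mc (pev p zR) k i j = (if i = 0 \<and> j = 0 \<and> 0 \<le> k then coeff p (nat k) else 0)"
proof -
  have "mc (pev p zR) k i j = (\<Sum>m\<in>{m\<in>{..degree p}. int m = k \<and> 0 = i \<and> 0 = j}. coeff p m)"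
    by (subst pev_mon_sum[of _ int "\<lambda>_. 0" "\<lambda>_. 0"]) (simp_all add: zR_pow mc_sum_mon)
  also have "\<dots> = (if i = 0 \<and> j = 0 then (\<Sum>m\<in>{m\<in>{..degree p}. int m = k}. coeff p m) else 0)"
    by auto
  finally show ?thesis using coeff_nat_cases[of p k] by simp
qed

definition normal :: "real poly fps \<Rightarrow> bool" where
  "normal F \<longleftrightarrow> (\<forall>n. poly (F $ n) 0 = (if n = 0 then 1 else 0))"

lemma spF_fev_x: "spF (fev F xR) (\<lambda>n k i j. k = 0 \<and> j = 0 \<and> 0 \<le> i)"
  unfolding spF_def spR_def by (auto simp: mc_pev_x split: if_splits)

lemma spF_fev_x_normal: "normal F \<Longrightarrow> spF (fev F xR) (\<lambda>n k i j. k = 0 \<and> j = 0 \<and> 0 \<le> i \<and> (n \<noteq> 0 \<longrightarrow> 0 < i))"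
  unfolding spF_def spR_def normal_def
  apply (auto simp: mc_pev_x poly_0_coeff_0 split: if_splits)
  apply (rule ccontr) apply (subgoal_tac "i = 0") apply force apply simp done

lemma spF_fev_xb: "spF (fev F (inverse xR)) (\<lambda>n k i j. k = 0 \<and> j = 0 \<and> i \<le> 0)"
  unfolding spF_def spR_def by (auto simp: mc_pev_xb split: if_splits)

lemma spF_fev_z: "spF (fev F zR) (\<lambda>n k i j. i = 0 \<and> j = 0 \<and> 0 \<le> k)"
  unfolding spF_def spR_def by (auto simp: mc_pev_z split: if_splits)

lemma spF_fev_z_normal: "normal F \<Longrightarrow> spF (fev F zR) (\<lambda>n k i j. i = 0 \<and> j = 0 \<and> 0 \<le> k \<and> (n \<noteq> 0 \<longrightarrow> 0 < k))"
  unfolding spF_def spR_def normal_def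
  apply (auto simp: mc_pev_z poly_0_coeff_0 split: if_splits)
  apply (rule ccontr) apply (subgoal_tac "k = 0") apply force apply simp done

lemma spF_liftR: "spF (liftR F) (\<lambda>n k i j. k = 0 \<and> i = 0 \<and> j = 0)"
  unfolding spF_def spR_def by (auto simp: mc_def cR_def)


definition BB :: "real fps" where "BB = fps_binomial (1/2)"

lemma fps_binomial_1: "fps_binomial (1::real) = 1 + fps_X"
proof (rule fps_ext)
  fix n :: nat
  have "(1::real) gchoose n = of_nat (1 choose n)"
    using binomial_gbinomial[of 1 n, where 'a=real] by simp
  then show "fps_binomial (1::real) $ n = (1 + fps_X) $ n"
    by (cases n) (auto simp: fps_X_def binomial_eq_0)
qed

lemma BB_sq: "BB * BB = 1 + fps_X"
  unfolding BB_def using fps_binomial_add_mult[of "1/2::real" "1/2"] fps_binomial_1 by simp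

definition gsq :: "(real \<Rightarrow> 'a::idom) \<Rightarrow> 'a fps \<Rightarrow> 'a fps" where
  "gsq \<phi> P = mapf \<phi> BB oo (P - 1)"

lemma gsq_props:
  fixes \<phi> :: "real \<Rightarrow> 'a::idom"
  assumes add: "\<And>a b. \<phi> (a + b) = \<phi> a + \<phi> b" and mult: "\<And>a b. \<phi> (a * b) = \<phi> a * \<phi> b"
    and z: "\<phi> 0 = 0" and o: "\<phi> 1 = 1" and P0: "P $ 0 = 1"
  shows "gsq \<phi> P ^ 2 = P" "gsq \<phi> P $ 0 = 1"
proof -
  have u0: "(P - 1) $ 0 = 0" using P0 by simp
  have "mapf \<phi> BB * mapf \<phi> BB = mapf \<phi> (1 + fps_X)"
    by (subst mapf_mult[symmetric]) (simp_all add: add mult z BB_sq)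
  also have "\<dots> = 1 + fps_X"
    by (simp add: mapf_add add mapf_one o z mapf_X)
  finally have sq: "mapf \<phi> BB * mapf \<phi> BB = 1 + fps_X" .
  have "gsq \<phi> P ^ 2 = (mapf \<phi> BB * mapf \<phi> BB) oo (P - 1)"
    unfolding gsq_def power2_eq_square by (simp add: fps_compose_mult_distrib[OF u0])
  also have "\<dots> = P" unfolding sq by (simp add: fps_compose_add_distrib fps_X_fps_compose_startby0[OF u0])
  finally show "gsq \<phi> P ^ 2 = P" .
  show "gsq \<phi> P $ 0 = 1"
    by (simp add: gsq_def fps_compose_nth BB_def o)
qed

lemma fps_sq_unique:
  fixes f g :: "'a::{idom,ring_char_0} fps"
  assumes "f ^ 2 = g ^ 2" "f $ 0 = g $ 0" "f $ 0 \<noteq> 0"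
  shows "f = g"
proof -
  have "(f - g) * (f + g) = 0" using assms(1) by (simp add: power2_eq_square algebra_simps)
  moreover have "(f + g) $ 0 \<noteq> 0"
  proof
    assume "(f + g) $ 0 = 0"
    then have "2 * f $ 0 = 0" using assms(2) by simp
    then show False using assms(3) by simp
  qed
  then have "f + g \<noteq> 0" by (metis fps_zero_nth)
  ultimately show ?thesis by simp
qed

lemma fps_sqrt1_eq:
  assumes "g ^ 2 = f" "g $ 0 = 1"
  shows "fps_sqrt1 f = g"
  unfolding fps_sqrt1_def
proof (rule the_equality)
  show "g ^ 2 = f \<and> g $ 0 = 1" using assms by simp
  fix h assume "h ^ 2 = f \<and> h $ 0 = 1"
  then show "h = g" using assms by (auto intro!: fps_sq_unique[of h g])
qed

definition ev0 :: "real poly \<Rightarrow> real" where "ev0 p = poly p 0"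

lemma normal_iff: "normal F \<longleftrightarrow> mapf ev0 F = 1"
  unfolding normal_def fps_eq_iff ev0_def by simp

lemma mapf_ev0_mult: "mapf ev0 (F * G) = mapf ev0 F * mapf ev0 G"
  by (rule mapf_mult) (simp_all add: ev0_def)

lemma mapf_ev0_one: "mapf ev0 1 = 1"
  by (rule mapf_one) (simp_all add: ev0_def)

lemma mapf_ev0_pow: "mapf ev0 (F ^ n) = mapf ev0 F ^ n"
  by (induction n) (simp_all add: mapf_ev0_mult mapf_ev0_one)

definition psq :: "real poly fps \<Rightarrow> real poly fps" where
  "psq P = gsq (\<lambda>c. [:c:]) P"

lemma psq_props:
  assumes "P $ 0 = 1"
  shows "psq P ^ 2 = P" "psq P $ 0 = 1"
  unfolding psq_def using gsq_props[of "\<lambda>c. [:c:]" P] assms by simp_all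

lemma psq_normal:
  assumes "P $ 0 = 1" "normal P"
  shows "normal (psq P)"
proof -
  have "mapf ev0 (psq P) ^ 2 = 1 ^ 2"
    using psq_props(1)[OF assms(1)] assms(2) by (simp add: normal_iff flip: mapf_ev0_pow)
  moreover have "mapf ev0 (psq P) $ 0 = 1" using psq_props(2)[OF assms(1)] by (simp add: ev0_def)
  ultimately show ?thesis unfolding normal_iff by (auto intro!: fps_sq_unique[of _ 1])
qed

definition pinv :: "real poly fps \<Rightarrow> real poly fps" where
  "pinv P = fps_right_inverse P 1"

lemma pinv_props:
  assumes "P $ 0 = 1"
  shows "P * pinv P = 1" "pinv P $ 0 = 1"
  unfolding pinv_def using fps_right_inverse[of P 1] assms by simp_all

lemma pinv_normal:
  assumes "P $ 0 = 1" "normal P"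
  shows "normal (pinv P)"
proof -
  have "mapf ev0 P * mapf ev0 (pinv P) = 1"
    using pinv_props(1)[OF assms(1)] by (metis mapf_ev0_mult mapf_ev0_one)
  then show ?thesis using assms(2) unfolding normal_iff by simp
qed

lemma fev_inverse:
  assumes "P $ 0 = 1"
  shows "fev (pinv P) X = inverse (fev P X)"
proof -
  have "fev P X * fev (pinv P) X = 1" using pinv_props(1)[OF assms] by (metis fev_mult fev_1)
  moreover have "fev P X $ 0 = 1" using assms by simp
  ultimately show ?thesis by (metis fps_inverse_unique)
qed

definition rsq :: "real fps \<Rightarrow> real fps" where "rsq F = gsq id F"

lemma rsq_props:
  assumes "F $ 0 = 1"
  shows "rsq F ^ 2 = F" "rsq F $ 0 = 1"
  unfolding rsq_def using gsq_props[of id F] assms by simp_all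


lemma walks_finite: "finite A \<Longrightarrow> finite (walks A k n)"
proof -
  assume "finite A"
  then have "finite {ss. set ss \<subseteq> A \<and> length ss = n}" by (rule finite_lists_length_eq)
  moreover have "walks A k n \<subseteq> {ss. set ss \<subseteq> A \<and> length ss = n}" by (auto simp: walks_def)
  ultimately show ?thesis by (rule finite_subset[rotated])
qed

lemma walk_pos_snoc:
  assumes "m \<le> length ss"
  shows "walk_pos k (ss @ [s]) m = walk_pos k ss m"
proof -
  have "(\<Sum>l<m. f ((ss @ [s]) ! l)) = (\<Sum>l<m. f (ss ! l))" for f :: "int \<times> int \<Rightarrow> int"
    using assms by (intro sum.cong) (auto simp: nth_append)
  then show ?thesis by (simp add: walk_pos_def)
qed

lemma walk_pos_snoc_last:
  "walk_pos k (ss @ [s]) (Suc (length ss)) = (fst (walk_pos k ss (length ss)) + fst s, snd (walk_pos k ss (length ss)) + snd s)"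
proof -
  have "(\<Sum>l<length ss. f ((ss @ [s]) ! l)) = (\<Sum>l<length ss. f (ss ! l))" for f :: "int \<times> int \<Rightarrow> int"
    by (intro sum.cong) (auto simp: nth_append)
  then show ?thesis by (simp add: walk_pos_def)
qed

lemma acount_Suc:
  assumes fin: "finite A"
  shows "acount A k i j (Suc n) =
    (if (i, j) \<in> Hline then 0 else (\<Sum>s\<in>A. acount A k (i - fst s) (j - snd s) n))"
proof (cases "(i, j) \<in> Hline")
  case True
  have e: "{ss \<in> walks A k (Suc n). walk_pos k ss (Suc n) = (i, j)} = {}"
    using True by (auto simp: walks_def dest!: bspec[where x="Suc n"])
  then show ?thesis using True by (simp only: acount_def e card.empty if_True)
next
  case False
  let ?T = "{ss \<in> walks A k (Suc n). walk_pos k ss (Suc n) = (i, j)}"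
  let ?B = "\<lambda>s. {ss \<in> walks A k n. walk_pos k ss n = (i - fst s, j - snd s)}"
  let ?f = "\<lambda>(s, ss). ss @ [s]"
  have inj: "inj_on ?f (SIGMA s:A. ?B s)"
    by (rule inj_onI) auto
  have img: "?f ` (SIGMA s:A. ?B s) = ?T"
  proof
    show "?f ` (SIGMA s:A. ?B s) \<subseteq> ?T"
    proof
      fix x assume "x \<in> ?f ` (SIGMA s:A. ?B s)"
      then obtain s ss where s: "s \<in> A" and ss: "ss \<in> walks A k n"
        and p: "walk_pos k ss n = (i - fst s, j - snd s)" and x: "x = ss @ [s]" by auto
      have len: "length ss = n" using ss by (simp add: walks_def)
      have "walk_pos k (ss @ [s]) m \<notin> Hline" if "m \<in> {1..Suc n}" for m
      proof (cases "m = Suc n")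
        case True
        then show ?thesis using walk_pos_snoc_last[of k ss s] p len False by simp
      next
        case False
        then have "m \<in> {1..n}" "m \<le> length ss" using that len by auto
        then show ?thesis using walk_pos_snoc[of m ss k s] ss by (simp add: walks_def)
      qed
      moreover have "walk_pos k (ss @ [s]) (Suc n) = (i, j)"
        using walk_pos_snoc_last[of k ss s] p len by simp
      ultimately show "x \<in> ?T" using ss s len x by (auto simp: walks_def)
    qed
  next
    show "?T \<subseteq> ?f ` (SIGMA s:A. ?B s)"
    proof
      fix ss' assume ss': "ss' \<in> ?T"
      then have len': "length ss' = Suc n" by (simp add: walks_def)
      then have ne: "ss' \<noteq> []" by auto
      define ss where "ss = butlast ss'"
      define s where "s = last ss'"
      have dec: "ss' = ss @ [s]" using ne by (simp add: ss_def s_def)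
      have len: "length ss = n" using len' by (simp add: ss_def)
      have sA: "s \<in> A" using ss' ne by (auto simp: walks_def s_def)
      have "set ss \<subseteq> A" using ss' dec by (auto simp: walks_def)
      moreover have "walk_pos k ss m \<notin> Hline" if "m \<in> {1..n}" for m
      proof -
        have "m \<in> {1..Suc n}" using that by auto
        then have "walk_pos k (ss @ [s]) m \<notin> Hline" using ss' unfolding dec walks_def by blast
        then show ?thesis using walk_pos_snoc[of m ss k s] len that by simp
      qed
      ultimately have "ss \<in> walks A k n" using len by (simp add: walks_def)
      moreover have "walk_pos k ss n = (i - fst s, j - snd s)"
        using ss' walk_pos_snoc_last[of k ss s] len unfolding dec by auto
      ultimately show "ss' \<in> ?f ` (SIGMA s:A. ?B s)" using sA dec by force
    qed
  qed
  have "acount A k i j (Suc n) = card ?T" by (simp add: acount_def)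
  also have "\<dots> = card (SIGMA s:A. ?B s)" using img card_image[OF inj] by simp
  also have "\<dots> = (\<Sum>s\<in>A. card (?B s))"
    using fin walks_finite[OF fin] by (intro card_SigmaI) auto
  finally show ?thesis using False by (simp add: acount_def)
qed

lemma acount_Hline:
  assumes "n \<ge> 1" "(i, j) \<in> Hline"
  shows "acount A k i j n = 0"
proof -
  have e: "{ss \<in> walks A k n. walk_pos k ss n = (i, j)} = {}"
    using assms by (auto simp: walks_def dest!: bspec[where x="n"])
  then show ?thesis by (simp only: acount_def e card.empty)
qed

lemma acount_0: "acount A k i j 0 = (if i = k \<and> j = 0 then 1 else 0)"
proof -
  have w: "walks A k 0 = {[]}" by (auto simp: walks_def)
  show ?thesis by (auto simp: acount_def w walk_pos_def)
qed

lemma endpoints_finite: "finite A \<Longrightarrow> finite (endpoints A k n)"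
  by (simp add: endpoints_def walks_finite)

lemma acount_not_endpoint: "(i, j) \<notin> endpoints A k n \<Longrightarrow> acount A k i j n = 0"
proof -
  assume a: "(i, j) \<notin> endpoints A k n"
  have e: "{ss \<in> walks A k n. walk_pos k ss n = (i, j)} = {}"
  proof (rule ccontr)
    assume "{ss \<in> walks A k n. walk_pos k ss n = (i, j)} \<noteq> {}"
    then obtain ss where "ss \<in> walks A k n" "walk_pos k ss n = (i, j)" by auto
    then have "(i, j) \<in> endpoints A k n" unfolding endpoints_def by (metis image_eqI)
    then show False using a by simp
  qed
  then show ?thesis by (simp only: acount_def e card.empty)
qed

lemma cR_of_nat: "cR (of_nat c) = of_nat c"
  by (induction c) (simp_all add: cR_add)

lemma mc_Scoef:
  assumes fin: "finite A"
  shows "mc (Scoef A k n xR yR) k' i j = (if k' = 0 then real (acount A k i j n) else 0)"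
proof -
  have "Scoef A k n xR yR = (\<Sum>e\<in>endpoints A k n. cR (real (acount A k (fst e) (snd e) n)) * mon 0 (fst e) (snd e))"
    unfolding Scoef_def by (intro sum.cong) (auto simp: cR_of_nat xR_powi yR_powi mon_mult)
  then have "mc (Scoef A k n xR yR) k' i j =
     (\<Sum>e\<in>{e\<in>endpoints A k n. 0 = k' \<and> fst e = i \<and> snd e = j}. real (acount A k (fst e) (snd e) n))"
    using mc_sum_mon[OF endpoints_finite[OF fin], of "\<lambda>e. real (acount A k (fst e) (snd e) n)" "\<lambda>_. 0" fst snd] by simp
  also have "\<dots> = (if k' = 0 then real (acount A k i j n) else 0)"
  proof (cases "k' = 0 \<and> (i, j) \<in> endpoints A k n")
    case True
    then have "{e\<in>endpoints A k n. 0 = k' \<and> fst e = i \<and> snd e = j} = {(i, j)}" by auto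
    then show ?thesis using True by simp
  next
    case False
    then have "{e\<in>endpoints A k n. 0 = k' \<and> fst e = i \<and> snd e = j} = {}" by auto
    then show ?thesis using False acount_not_endpoint[of i j A k n] by simp
  qed
  finally show ?thesis .
qed

lemma fls_const_sum: "fls_const (\<Sum>e\<in>E. f e) = (\<Sum>e\<in>E. fls_const (f e))"
  by (induction E rule: infinite_finite_induct) (auto simp: fls_const_add')

lemma fls_const_mult': "fls_const (a * b) = fls_const a * fls_const (b::'a::comm_ring_1)"
  by simp

lemma fls_const_Scoef: "fls_const (Scoef A k n xM yM) = Scoef A k n xR yR"
  unfolding Scoef_def fls_const_sum
  by (intro sum.cong) (auto simp: fls_of_nat fls_const_power_int xR_def yR_def fls_const_mult' simp del: fls_const_mult_const)

lemma mc_Splus: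
  assumes fin: "finite A"
  shows "mc (Splus A $ n) k i j = (if 0 < k then real (acount A k i j n) else 0)"
proof -
  have "mc (Splus A $ n) k i j = (if 0 < k then Scoef A k n xM yM $$ i $$ j else 0)"
    by (auto simp: Splus_def mc_def)
  also have "Scoef A k n xM yM $$ i $$ j = mc (fls_const (Scoef A k n xM yM)) 0 i j"
    by (simp add: mc_def)
  finally show ?thesis by (simp add: fls_const_Scoef mc_Scoef fin)
qed

lemma mc_Sk:
  assumes fin: "finite A"
  shows "mc (Sk A k $ n) k' i j = (if k' = 0 then real (acount A k i j n) else 0)"
  by (simp add: Sk_def mc_Scoef fin)

lemma mc_S0z:
  assumes fin: "finite A"
  shows "mc (S0z A $ n) k i j = (if i = 0 \<and> j = 0 then real (acount A 0 k 0 n) else 0)"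
proof -
  let ?E = "{i. (i, 0) \<in> endpoints A 0 n}"
  have finE: "finite ?E"
  proof -
    have "?E \<subseteq> fst ` endpoints A 0 n" by force
    then show ?thesis using endpoints_finite[OF fin] finite_subset by blast
  qed
  have "S0z A $ n = (\<Sum>e\<in>?E. cR (real (acount A 0 e 0 n)) * mon e 0 0)"
    unfolding S0z_def S0coef_def by (simp add: cR_of_nat zR_powi)
  then have "mc (S0z A $ n) k i j = (\<Sum>e\<in>{e\<in>?E. e = k \<and> 0 = i \<and> 0 = j}. real (acount A 0 e 0 n))"
    using mc_sum_mon[OF finE, of "\<lambda>e. real (acount A 0 e 0 n)" "\<lambda>e. e" "\<lambda>_. 0" "\<lambda>_. 0"] by simp
  also have "\<dots> = (if i = 0 \<and> j = 0 then real (acount A 0 k 0 n) else 0)"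
  proof (cases "i = 0 \<and> j = 0 \<and> k \<in> ?E")
    case True
    then have "{e\<in>?E. e = k \<and> 0 = i \<and> 0 = j} = {k}" by auto
    then show ?thesis using True by simp
  next
    case False
    then have "{e\<in>?E. e = k \<and> 0 = i \<and> 0 = j} = {}" by auto
    then show ?thesis using False acount_not_endpoint[of k 0 A 0 n] by auto
  qed
  finally show ?thesis .
qed


definition stepR :: "(int \<times> int) set \<Rightarrow> R" where
  "stepR A = (\<Sum>s\<in>A. mon 0 (fst s) (snd s))"

lemma Hline_iff: "(i, j) \<in> Hline \<longleftrightarrow> j = 0 \<and> i \<le> 0"
  by (auto simp: Hline_def)

lemma sum_layer:
  assumes "finite A"
  shows "(\<Sum>s\<in>{s\<in>A. snd s = b}. mon 0 (fst s) (snd s)) = (\<Sum>i\<in>{i. (i, b) \<in> A}. mon 0 i b)"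
proof -
  have "{s\<in>A. snd s = b} = (\<lambda>i. (i, b)) ` {i. (i, b) \<in> A}" by force
  moreover have "inj_on (\<lambda>i. (i, b)) {i. (i, b) \<in> A}" by (auto intro: inj_onI)
  ultimately show ?thesis by (simp add: sum.reindex)
qed

lemma stepR_eq:
  assumes fin: "finite A" and sym: "\<And>i j. (i, j) \<in> A \<Longrightarrow> (i, - j) \<in> A"
    and small: "\<And>i j. (i, j) \<in> A \<Longrightarrow> \<bar>j\<bar> \<le> 1"
  shows "A0 A xR + (yR + inverse yR) * A1 A xR = stepR A"
proof -
  let ?A0 = "{s\<in>A. snd s = 0}" and ?A1 = "{s\<in>A. snd s = 1}" and ?Am = "{s\<in>A. snd s = -1}"
  have splitA: "A = ?A0 \<union> (?A1 \<union> ?Am)"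
  proof (rule set_eqI)
    fix s show "s \<in> A \<longleftrightarrow> s \<in> ?A0 \<union> (?A1 \<union> ?Am)"
    proof
      assume s: "s \<in> A"
      then have "\<bar>snd s\<bar> \<le> 1" using small[of "fst s" "snd s"] by simp
      then have "snd s = 0 \<or> snd s = 1 \<or> snd s = -1" by linarith
      then show "s \<in> ?A0 \<union> (?A1 \<union> ?Am)" using s by blast
    qed blast
  qed
  have f: "finite ?A0" "finite ?A1" "finite ?Am" using fin by simp_all
  have d1: "?A0 \<inter> (?A1 \<union> ?Am) = {}" and d2: "?A1 \<inter> ?Am = {}" by auto
  let ?g = "\<lambda>s. mon 0 (fst s) (snd s)"
  have "stepR A = sum ?g ?A0 + (sum ?g ?A1 + sum ?g ?Am)"
    unfolding stepR_def
    by (subst splitA, subst sum.union_disjoint[OF f(1) _ d1], use f in simp,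
        subst sum.union_disjoint[OF f(2) f(3) d2], rule refl)
  also have "\<dots> = (\<Sum>i\<in>{i. (i, 0) \<in> A}. mon 0 i 0) + ((\<Sum>i\<in>{i. (i, 1) \<in> A}. mon 0 i 1) +
      (\<Sum>i\<in>{i. (i, -1) \<in> A}. mon 0 i (-1)))"
    using sum_layer[OF fin, of 0] sum_layer[OF fin, of 1] sum_layer[OF fin, of "-1"] by simp
  also have "{i. (i, -1) \<in> A} = {i. (i, 1) \<in> A}" using sym by force
  also have "(\<Sum>i\<in>{i. (i, 0) \<in> A}. mon 0 i 0) = A0 A xR"
    by (simp add: A0_def xR_powi)
  also have "(\<Sum>i\<in>{i. (i, 1) \<in> A}. mon 0 i 1) + (\<Sum>i\<in>{i. (i, 1) \<in> A}. mon 0 i (-1))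
      = (yR + inverse yR) * A1 A xR"
  proof -
    have "yR = mon 0 0 1" by (simp add: yR_powi[of 1, symmetric])
    then have "(yR + inverse yR) * A1 A xR = (\<Sum>i\<in>{i. (i, 1) \<in> A}. mon 0 0 1 * mon 0 i 0 + mon 0 0 (-1) * mon 0 i 0)"
      by (simp add: A1_def xR_powi inverse_yR sum_distrib_left distrib_right sum.distrib)
    also have "\<dots> = (\<Sum>i\<in>{i. (i, 1) \<in> A}. mon 0 i 1) + (\<Sum>i\<in>{i. (i, 1) \<in> A}. mon 0 i (-1))"
      by (simp add: mon_mult sum.distrib)
    finally show ?thesis by (rule HOL.sym)
  qed
  finally show ?thesis by (rule HOL.sym)
qed

lemma Kxy_alt:
  assumes fin: "finite A" and sym: "\<And>i j. (i, j) \<in> A \<Longrightarrow> (i, - j) \<in> A"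
    and small: "\<And>i j. (i, j) \<in> A \<Longrightarrow> \<bar>j\<bar> \<le> 1"
  shows "Kxy A = 1 - fps_X * fps_const (stepR A)"
proof -
  have "fps_const (stepR A) = fps_const (A0 A xR) + fps_const ((yR + inverse yR) * A1 A xR)"
    using stepR_eq[OF assms] by (simp add: fps_const_add)
  then show ?thesis unfolding Kxy_def by (simp only: diff_diff_eq distrib_left)
qed

lemma mc_stepR_mult: "mc (stepR A * r) k i j = (\<Sum>s\<in>A. mc r k (i - fst s) (j - snd s))"
  unfolding stepR_def sum_distrib_right mc_sum by (simp add: mc_mon_mult)

lemma K_mult_eq: "(1 - fps_X * fps_const c) * F = F - fps_X * (fps_const c * (F :: R fps))"
  by (simp add: left_diff_distrib mult.assoc)

lemma K_mult_nth:
  fixes c :: R and F :: "R fps"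
  shows "((1 - fps_X * fps_const c) * F) $ Suc m = F $ Suc m - c * F $ m"
  unfolding K_mult_eq by (simp add: fps_X_mult_nth)

lemma K_mult_nth0:
  fixes c :: R and F :: "R fps"
  shows "((1 - fps_X * fps_const c) * F) $ 0 = F $ 0"
  unfolding K_mult_eq by (simp add: fps_X_mult_nth)

lemma uniq:
  fixes X1 X2 :: "R fps" and c :: R
  defines "K \<equiv> 1 - fps_X * fps_const c"
  assumes e0: "X1 $ 0 = X2 $ 0"
    and a1: "\<And>n k i j. n \<ge> 1 \<Longrightarrow> mc ((K * X1) $ n) k i j \<noteq> 0 \<Longrightarrow> j = 0 \<and> i \<le> 0"
    and a2: "\<And>n k i j. n \<ge> 1 \<Longrightarrow> mc ((K * X2) $ n) k i j \<noteq> 0 \<Longrightarrow> j = 0 \<and> i \<le> 0"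
    and b1: "\<And>n k i. n \<ge> 1 \<Longrightarrow> i \<le> 0 \<Longrightarrow> mc (X1 $ n) k i 0 = 0"
    and b2: "\<And>n k i. n \<ge> 1 \<Longrightarrow> i \<le> 0 \<Longrightarrow> mc (X2 $ n) k i 0 = 0"
  shows "X1 = X2"
proof -
  have "(X1 - X2) $ n = 0" for n
  proof (induction n rule: less_induct)
    case (less n)
    show ?case
    proof (cases n)
      case 0 then show ?thesis using e0 by simp
    next
      case (Suc m)
      have IH: "(X1 - X2) $ m = 0" using less Suc by simp
      have kd: "(K * (X1 - X2)) $ n = (X1 - X2) $ n"
        unfolding K_def Suc K_mult_nth using IH Suc by simp
      have "mc ((X1 - X2) $ n) k i j = 0" for k i j
      proof (cases "j = 0 \<and> i \<le> 0")
        case True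
        then show ?thesis using b1[of n i k] b2[of n i k] Suc by simp
      next
        case False
        then have "mc ((K * X1) $ n) k i j = 0" "mc ((K * X2) $ n) k i j = 0"
          using a1[of n k i j] a2[of n k i j] Suc by auto
        then have "mc ((K * (X1 - X2)) $ n) k i j = 0" by (simp add: algebra_simps)
        then show ?thesis using kd by simp
      qed
      then show ?thesis by (intro mc_eqI) simp
    qed
  qed
  then have "X1 - X2 = 0" by (intro fps_ext) simp
  then show ?thesis by simp
qed

lemma Splus_conds:
  assumes fin: "finite A"
  shows "\<And>n k i j. n \<ge> 1 \<Longrightarrow> mc (((1 - fps_X * fps_const (stepR A)) * Splus A) $ n) k i j \<noteq> 0 \<Longrightarrow> j = 0 \<and> i \<le> 0"
    and "\<And>n k i. n \<ge> 1 \<Longrightarrow> i \<le> 0 \<Longrightarrow> mc (Splus A $ n) k i 0 = 0"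
proof -
  fix n :: nat and k i j :: int assume n: "n \<ge> 1" and nz: "mc (((1 - fps_X * fps_const (stepR A)) * Splus A) $ n) k i j \<noteq> 0"
  obtain m where m: "n = Suc m" using n by (cases n) auto
  show "j = 0 \<and> i \<le> 0"
  proof (rule ccontr)
    assume "\<not> (j = 0 \<and> i \<le> 0)"
    then have nh: "(i, j) \<notin> Hline" by (simp add: Hline_iff)
    have "mc (((1 - fps_X * fps_const (stepR A)) * Splus A) $ n) k i j = 0"
      unfolding m K_mult_nth
      by (simp add: mc_stepR_mult mc_Splus fin acount_Suc nh of_nat_sum)
    with nz show False by simp
  qed
next
  fix n :: nat and k i :: int assume "n \<ge> 1" "i \<le> 0"
  then show "mc (Splus A $ n) k i 0 = 0"
    by (simp add: mc_Splus fin acount_Hline Hline_iff)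
qed

lemma Sk0_conds:
  assumes fin: "finite A"
  shows "\<And>n k i j. n \<ge> 1 \<Longrightarrow> mc (((1 - fps_X * fps_const (stepR A)) * Sk A 0) $ n) k i j \<noteq> 0 \<Longrightarrow> j = 0 \<and> i \<le> 0"
    and "\<And>n k i. n \<ge> 1 \<Longrightarrow> i \<le> 0 \<Longrightarrow> mc (Sk A 0 $ n) k i 0 = 0"
proof -
  fix n :: nat and k i j :: int assume n: "n \<ge> 1" and nz: "mc (((1 - fps_X * fps_const (stepR A)) * Sk A 0) $ n) k i j \<noteq> 0"
  obtain m where m: "n = Suc m" using n by (cases n) auto
  show "j = 0 \<and> i \<le> 0"
  proof (rule ccontr)
    assume "\<not> (j = 0 \<and> i \<le> 0)"
    then have nh: "(i, j) \<notin> Hline" by (simp add: Hline_iff)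
    have "mc (((1 - fps_X * fps_const (stepR A)) * Sk A 0) $ n) k i j = 0"
      unfolding m K_mult_nth
      by (simp add: mc_stepR_mult mc_Sk fin acount_Suc nh of_nat_sum)
    with nz show False by simp
  qed
next
  fix n :: nat and k i :: int assume "n \<ge> 1" "i \<le> 0"
  then show "mc (Sk A 0 $ n) k i 0 = 0"
    by (simp add: mc_Sk fin acount_Hline Hline_iff)
qed

lemma Sk0_0: "finite A \<Longrightarrow> Sk A 0 $ 0 = 1"
  by (rule mc_eqI) (simp add: mc_Sk acount_0 mc_one)

lemma Splus_0: "finite A \<Longrightarrow> mc (Splus A $ 0) k i j = (if 0 < k \<and> i = k \<and> j = 0 then 1 else 0)"
  by (simp add: mc_Splus acount_0)


definition symR :: "R \<Rightarrow> bool" where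
  "symR r \<longleftrightarrow> (\<forall>k i j. mc r k i j = mc r k (- i) j)"

lemma pev_prod:
  "pev p X * pev q Y = (\<Sum>e\<in>{..degree p} \<times> {..degree q}. cR (coeff p (fst e) * coeff q (snd e)) * (X ^ fst e * Y ^ snd e))"
  unfolding pev_def sum_product sum.cartesian_product
  by (intro sum.cong) (auto simp: cR_mult algebra_simps)

lemma mc_pev_x_xb:
  "mc (pev p xR * pev q (inverse xR)) k i j =
   (\<Sum>e\<in>{e\<in>{..degree p} \<times> {..degree q}. 0 = k \<and> int (fst e) - int (snd e) = i \<and> 0 = j}. coeff p (fst e) * coeff q (snd e))"
proof -
  have "pev p xR * pev q (inverse xR) = (\<Sum>e\<in>{..degree p} \<times> {..degree q}. cR (coeff p (fst e) * coeff q (snd e)) * mon 0 (int (fst e) - int (snd e)) 0)"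
    unfolding pev_prod by (intro sum.cong) (simp_all add: xR_pow xb_pow mon_mult)
  then show ?thesis by (simp add: mc_sum_mon)
qed

lemma mc_pev_swap:
  "mc (pev p xR * pev q (inverse xR)) k i j = mc (pev q xR * pev p (inverse xR)) k (- i) j"
proof -
  let ?S1 = "{e\<in>{..degree p} \<times> {..degree q}. 0 = k \<and> int (fst e) - int (snd e) = i \<and> 0 = j}"
  let ?S2 = "{e\<in>{..degree q} \<times> {..degree p}. 0 = k \<and> int (fst e) - int (snd e) = - i \<and> 0 = j}"
  have img: "prod.swap ` ?S1 = ?S2" by force
  have "mc (pev q xR * pev p (inverse xR)) k (- i) j = (\<Sum>e\<in>?S2. coeff q (fst e) * coeff p (snd e))"
    by (rule mc_pev_x_xb)
  also have "\<dots> = (\<Sum>e\<in>?S1. coeff q (snd e) * coeff p (fst e))"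
    unfolding img[symmetric] by (subst sum.reindex) (auto intro: inj_onI)
  also have "\<dots> = mc (pev p xR * pev q (inverse xR)) k i j"
    by (simp add: mc_pev_x_xb mult.commute)
  finally show ?thesis by (rule HOL.sym)
qed

lemma mc_fev_swap:
  "mc ((fev P xR * fev Q (inverse xR)) $ n) k i j = mc ((fev Q xR * fev P (inverse xR)) $ n) k (- i) j"
proof -
  have "mc ((fev P xR * fev Q (inverse xR)) $ n) k i j =
      (\<Sum>m=0..n. mc (pev (P $ m) xR * pev (Q $ (n - m)) (inverse xR)) k i j)"
    by (simp add: fps_mult_nth mc_sum)
  also have "\<dots> = (\<Sum>m=0..n. mc (pev (Q $ (n - m)) xR * pev (P $ m) (inverse xR)) k (- i) j)"
    by (intro sum.cong refl) (rule mc_pev_swap)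
  also have "\<dots> = (\<Sum>m=0..n. mc (pev (P $ m) (inverse xR) * pev (Q $ (n - m)) xR) k (- i) j)"
    by (intro sum.cong refl) (simp only: mult.commute)
  also have "\<dots> = mc ((fev P (inverse xR) * fev Q xR) $ n) k (- i) j"
    by (simp add: fps_mult_nth mc_sum)
  also have "fev P (inverse xR) * fev Q xR = fev Q xR * fev P (inverse xR)"
    by (rule mult.commute)
  finally show ?thesis .
qed

lemma symR_sum_mon:
  assumes fin: "finite E" and bij: "bij_betw \<sigma> E E" and f: "\<And>e. e \<in> E \<Longrightarrow> f (\<sigma> e) = - f e"
  shows "symR (\<Sum>e\<in>E. mon 0 (f e) 0)"
  unfolding symR_def
proof (intro allI)
  fix k i j :: int
  have eq: "(\<Sum>e\<in>E. mon 0 (f e) 0) = (\<Sum>e\<in>E. cR 1 * mon 0 (f e) 0)" by simp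
  let ?S1 = "{e\<in>E. 0 = k \<and> f e = i \<and> 0 = j}"
  let ?S2 = "{e\<in>E. 0 = k \<and> f e = - i \<and> 0 = j}"
  have inj: "inj_on \<sigma> ?S2" using bij by (auto simp: bij_betw_def intro: inj_on_subset)
  have img: "\<sigma> ` ?S2 = ?S1"
  proof
    show "\<sigma> ` ?S2 \<subseteq> ?S1" using bij f by (auto simp: bij_betw_def)
    show "?S1 \<subseteq> \<sigma> ` ?S2"
    proof
      fix e assume e: "e \<in> ?S1"
      then obtain e' where e': "e' \<in> E" "e = \<sigma> e'" using bij by (auto simp: bij_betw_def)
      then have "f e' = - i" using f[of e'] e by auto
      then show "e \<in> \<sigma> ` ?S2" using e e' by auto
    qed
  qed
  have "card ?S1 = card ?S2" using img card_image[OF inj] by simp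
  moreover have "mc (\<Sum>e\<in>E. mon 0 (f e) 0) k i j = real (card ?S1)"
    using mc_sum_mon[OF fin, of "\<lambda>_. 1" "\<lambda>_. 0" f "\<lambda>_. 0" k i j] by simp
  moreover have "mc (\<Sum>e\<in>E. mon 0 (f e) 0) k (- i) j = real (card ?S2)"
    using mc_sum_mon[OF fin, of "\<lambda>_. 1" "\<lambda>_. 0" f "\<lambda>_. 0" k "- i" j] by simp
  ultimately show "mc (\<Sum>e\<in>E. mon 0 (f e) 0) k i j = mc (\<Sum>e\<in>E. mon 0 (f e) 0) k (- i) j"
    by simp
qed

lemma symR_add: "symR r \<Longrightarrow> symR s \<Longrightarrow> symR (r + s)"
  and symR_diff: "symR r \<Longrightarrow> symR s \<Longrightarrow> symR (r - s)"
  and symR_cR: "symR r \<Longrightarrow> symR (cR c * r)"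
  by (simp_all add: symR_def)

lemma symR_1: "symR 1"
  by (simp add: symR_def mc_one)

lemma symset_sums:
  assumes fin: "finite S" and s: "\<And>i. i \<in> S \<Longrightarrow> - i \<in> S"
  shows "symR (\<Sum>i\<in>S. mon 0 i 0)" "symR ((\<Sum>i\<in>S. mon 0 i 0) ^ 2)"
proof -
  have b1: "bij_betw uminus S S"
    by (rule bij_betwI[where g=uminus]) (auto simp: s)
  show "symR (\<Sum>i\<in>S. mon 0 i 0)"
    by (rule symR_sum_mon[OF fin b1]) auto
  have "(\<Sum>i\<in>S. mon 0 i 0) ^ 2 = (\<Sum>e\<in>S \<times> S. mon 0 (fst e + snd e) 0)"
    unfolding power2_eq_square sum_product sum.cartesian_product
    by (intro sum.cong) (auto simp: mon_mult)
  moreover have "bij_betw (\<lambda>e. (- fst e, - snd e)) (S \<times> S) (S \<times> S)"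
    by (rule bij_betwI[where g="\<lambda>e. (- fst e, - snd e)"]) (auto simp: s)
  ultimately show "symR ((\<Sum>i\<in>S. mon 0 i 0) ^ 2)"
    using fin by (simp add: symR_sum_mon)
qed

lemma deltax_expand:
  "deltax A = 1 - fps_X * fps_const (2 * A0 A xR) + fps_X ^ 2 * fps_const (A0 A xR ^ 2 - 4 * A1 A xR ^ 2)"
proof -
  have n4: "(4 :: R fps) = fps_const 4" "(2 :: R fps) = fps_const 2"
    by (simp_all add: numeral_fps_const)
  show ?thesis unfolding deltax_def n4
    by (simp add: power2_eq_square algebra_simps)
qed

lemma cR_numeral: "cR (numeral w) = numeral w"
  by (simp add: cR_def)

lemma symR_numeral: "symR r \<Longrightarrow> symR (numeral w * r)"
  using symR_cR[of r "numeral w"] by (simp add: cR_numeral)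

lemma symR_uminus: "symR r \<Longrightarrow> symR (- r)"
  by (simp add: symR_def)

lemma symR_0: "symR 0"
  by (simp add: symR_def)

lemma deltax_nth:
  "deltax A $ n = (if n = 0 then 1 else if n = 1 then - (2 * A0 A xR)
     else if n = 2 then A0 A xR ^ 2 - 4 * A1 A xR ^ 2 else 0)"
  unfolding deltax_expand by (simp add: fps_X_power_mult_nth fps_X_mult_nth)

lemma deltax_sym:
  assumes fin: "finite A" and sym: "\<And>i j. (i, j) \<in> A \<Longrightarrow> (i, - j) \<in> A"
    and rev: "\<And>i j. (i, j) \<in> A \<Longrightarrow> (- i, - j) \<in> A"
  shows "symR (deltax A $ n)"
proof -
  let ?S0 = "{i. (i, 0) \<in> A}" and ?S1 = "{i. (i, 1) \<in> A}"
  have f0: "finite ?S0"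
    using finite_vimageI[OF fin, of "\<lambda>i. (i, 0::int)"] by (simp add: vimage_def inj_on_def)
  have f1: "finite ?S1"
    using finite_vimageI[OF fin, of "\<lambda>i. (i, 1::int)"] by (simp add: vimage_def inj_on_def)
  have s0: "- i \<in> ?S0" if "i \<in> ?S0" for i using rev that by force
  have s1: "- i \<in> ?S1" if "i \<in> ?S1" for i using rev[of i 1] sym[of "-i" "-1"] that by simp
  have a: "A0 A xR = (\<Sum>i\<in>?S0. mon 0 i 0)" by (simp add: A0_def xR_powi)
  have b: "A1 A xR = (\<Sum>i\<in>?S1. mon 0 i 0)" by (simp add: A1_def xR_powi)
  note sa = symset_sums[OF f0 s0] and sb = symset_sums[OF f1 s1]
  show ?thesis
    unfolding deltax_nth a b
    using sa sb by (auto intro!: symR_1 symR_0 symR_uminus symR_numeral symR_diff)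
qed

lemma R_fps_mult_left_cancel:
  fixes a b c :: "R fps"
  assumes "a $ 0 \<noteq> 0" "a * b = a * c" shows "b = c"
proof -
  have "a \<noteq> 0" using assms(1) by auto
  then show ?thesis using assms(2) by simp
qed

lemma Delb_eq_Del:
  assumes fin: "finite A" and sym: "\<And>i j. (i, j) \<in> A \<Longrightarrow> (i, - j) \<in> A"
    and rev: "\<And>i j. (i, j) \<in> A \<Longrightarrow> (- i, - j) \<in> A"
    and cf: "canon_fact A D Del Delb"
  shows "Delb = Del"
proof -
  let ?x = "xR" and ?xb = "inverse xR"
  define Dp where "Dp = mapf (\<lambda>c. [:c:]) D"
  have lD: "liftR D = fev Dp X" for X unfolding Dp_def by (rule liftR_fev)
  have d: "deltax A = fev (Dp * Del) ?x * fev Delb ?xb"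
    using cf unfolding canon_fact_def by (simp add: lD[of xR] fev_mult)
  have "mc ((fev Delb ?x * fev (Dp * Del) ?xb) $ n) k i j = mc (deltax A $ n) k i j" for n k i j
  proof -
    have "mc ((fev Delb ?x * fev (Dp * Del) ?xb) $ n) k i j = mc ((fev (Dp * Del) ?x * fev Delb ?xb) $ n) k (- i) j"
      using mc_fev_swap[of "Dp * Del" Delb n k "- i" j] by simp
    also have "\<dots> = mc (deltax A $ n) k (- i) j" by (simp add: d)
    also have "\<dots> = mc (deltax A $ n) k i j"
      using deltax_sym[OF fin sym rev, of n] unfolding symR_def by metis
    finally show ?thesis .
  qed
  then have "fev Delb ?x * fev (Dp * Del) ?xb = deltax A"
    by (intro fps_ext mc_eqI) simp
  moreover have "fev Delb ?x * fev (Dp * Del) ?xb = liftR D * (fev Delb ?x * fev Del ?xb)"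
    unfolding fev_mult lD[of "inverse xR", symmetric] by (simp only: ac_simps)
  moreover have "deltax A = liftR D * (fev Del ?x * fev Delb ?xb)"
    unfolding d fev_mult lD[of xR, symmetric] by (simp only: ac_simps)
  ultimately have e1: "liftR D * (fev Delb ?x * fev Del ?xb) = liftR D * (fev Del ?x * fev Delb ?xb)"
    by simp
  have D0: "(liftR D) $ 0 \<noteq> 0" using cf by (simp add: canon_fact_def)
  have e2: "fev Delb ?x * fev Del ?xb = fev Del ?x * fev Delb ?xb"
    by (rule R_fps_mult_left_cancel[OF D0 e1])
  have Db0: "Delb $ 0 = 1" and D0': "Del $ 0 = 1" and nDb: "normal Delb" and nD: "normal Del"
    using cf by (simp_all add: canon_fact_def normal_def)
  define U where "U = Del * pinv Delb"
  have inv1: "fev Delb X * fev (pinv Delb) X = 1" for X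
    using pinv_props(1)[OF Db0] by (metis fev_mult fev_1)
  have "fev U ?x = fev U ?xb"
  proof -
    have "fev U ?x = (fev Del ?x * fev Delb ?xb) * fev (pinv Delb) ?x * fev (pinv Delb) ?xb"
      unfolding U_def fev_mult
      using inv1[of ?xb] by (simp add: algebra_simps)
    also have "\<dots> = (fev Delb ?x * fev Del ?xb) * fev (pinv Delb) ?x * fev (pinv Delb) ?xb"
      using e2 by simp
    also have "\<dots> = fev U ?xb"
      unfolding U_def fev_mult
      using inv1[of ?x] by (simp add: algebra_simps)
    finally show ?thesis .
  qed
  have nU: "normal U"
  proof -
    have "mapf ev0 U = mapf ev0 Del * mapf ev0 (pinv Delb)"
      unfolding U_def by (rule mapf_ev0_mult)
    then show ?thesis using nD pinv_normal[OF Db0 nDb] unfolding normal_iff by simp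
  qed
  have "U = 1"
  proof (rule fps_ext, rule poly_eqI)
    fix n m
    show "coeff (U $ n) m = coeff (1 $ n) m"
    proof (cases m)
      case 0
      then show ?thesis using nU unfolding normal_def by (simp add: poly_0_coeff_0[symmetric])
    next
      case (Suc m')
      have "coeff (U $ n) m = mc (pev (U $ n) ?x) 0 (int m) 0" by (simp add: mc_pev_x)
      also have "\<dots> = mc (pev (U $ n) ?xb) 0 (int m) 0"
        using \<open>fev U ?x = fev U ?xb\<close> by (metis fev_nth)
      also have "\<dots> = 0" using Suc by (simp add: mc_pev_xb)
      finally show ?thesis using Suc by simp
    qed
  qed
  then have "Del = Del * (pinv Delb * Delb)" using pinv_props(1)[OF Db0] by (simp add: mult.commute)
  also have "\<dots> = U * Delb" by (simp add: U_def mult.assoc)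
  finally show ?thesis using \<open>U = 1\<close> by simp
qed


definition yfreeR :: "R \<Rightarrow> bool" where "yfreeR r \<longleftrightarrow> spR r (\<lambda>k i j. j = 0)"
definition yfreeF :: "R fps \<Rightarrow> bool" where "yfreeF F \<longleftrightarrow> (\<forall>n. yfreeR (F $ n))"

lemma yfreeR_mult: "yfreeR r \<Longrightarrow> yfreeR s \<Longrightarrow> yfreeR (r * s)"
  unfolding yfreeR_def by (rule spR_mono[OF spR_mult]) (auto simp: psum_def)
lemma yfreeR_add: "yfreeR r \<Longrightarrow> yfreeR s \<Longrightarrow> yfreeR (r + s)"
  unfolding yfreeR_def by (rule spR_add)
lemma yfreeR_0: "yfreeR 0"
  unfolding yfreeR_def by simp
lemma yfreeR_sum: "(\<And>e. e \<in> E \<Longrightarrow> yfreeR (f e)) \<Longrightarrow> yfreeR (\<Sum>e\<in>E. f e)"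
  unfolding yfreeR_def by (rule spR_sum)
lemma yfreeR_mon: "yfreeR (mon k i 0)"
  unfolding yfreeR_def by (rule spR_mono[OF spR_mon]) auto

lemma yfree_coeff_mult:
  assumes "\<And>l. l \<le> n \<Longrightarrow> yfreeR (F $ l)" "\<And>l. l \<le> n \<Longrightarrow> yfreeR (G $ l)"
  shows "yfreeR ((F * G) $ n)"
  unfolding fps_mult_nth by (rule yfreeR_sum) (auto intro!: yfreeR_mult assms)

lemma yfreeF_mult: "yfreeF F \<Longrightarrow> yfreeF G \<Longrightarrow> yfreeF (F * G)"
  unfolding yfreeF_def using yfree_coeff_mult by blast

lemma yfreeF_pow: "yfreeF F \<Longrightarrow> yfreeF (F ^ n)"
proof (induction n)
  case 0 then show ?case
    by (auto simp: yfreeF_def yfreeR_def spR_def mc_one)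
next
  case (Suc n) then show ?case by (simp add: yfreeF_mult)
qed

lemma yfreeF_spF: "spF F (\<lambda>n k i j. j = 0) \<Longrightarrow> yfreeF F"
  unfolding yfreeF_def yfreeR_def spF_def by simp

lemma fps_X_shift: "f $ 0 = 0 \<Longrightarrow> fps_X * fps_shift 1 f = (f :: 'a::comm_ring_1 fps)"
  by (rule fps_ext) (simp add: fps_X_mult_nth)

lemma mc_e_mult: "mc ((yR ^ j + inverse yR ^ j) * r) k i l = mc r k i (l - int j) + mc r k i (l + int j)"
  by (simp add: yR_pow inverse_yR mon_pow distrib_right mc_mon_mult)

lemma step_alg:
  fixes L W Y V E1 F0 F1 F2 :: "'a::comm_ring_1"
  assumes q: "L * Y = W * Y ^ 2 + W" and e: "E1 * F1 = F2 + F0"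
  shows "1 + V * W * (Y ^ (N + 1) * F0 - Y ^ N * F1) + (L - W * E1) * (V * (F1 * Y ^ (N + 1)))
       = 1 + V * W * (Y ^ (N + 2) * F1 - Y ^ (N + 1) * F2)"
proof -
  have "(1 + V * W * (Y ^ (N + 1) * F0 - Y ^ N * F1) + (L - W * E1) * (V * (F1 * Y ^ (N + 1))))
     - (1 + V * W * (Y ^ (N + 2) * F1 - Y ^ (N + 1) * F2))
     = V * Y ^ N * (F1 * (L * Y - W * Y ^ 2 - W) + W * Y * (F0 + F2 - E1 * F1))"
    by (simp add: algebra_simps power_add power2_eq_square)
  also have "\<dots> = 0" using q e by (simp add: algebra_simps)
  finally show ?thesis by (simp only: right_minus_eq)
qed

lemma yfreeR_A01: "yfreeR (A0 A xR)" "yfreeR (A1 A xR)"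
  unfolding A0_def A1_def xR_powi by (auto intro!: yfreeR_sum yfreeR_mon)

lemma A1_ne0:
  assumes fin: "finite A" and ne: "\<exists>i. (i, 1) \<in> A"
  shows "A1 A xR \<noteq> 0"
proof
  assume z: "A1 A xR = 0"
  obtain i0 where i0: "(i0, 1) \<in> A" using ne by auto
  have f1: "finite {i. (i, 1) \<in> A}"
    using finite_vimageI[OF fin, of "\<lambda>i. (i, 1::int)"] by (simp add: vimage_def inj_on_def)
  have "mc (A1 A xR) 0 i0 0 = (\<Sum>i\<in>{i. (i, 1) \<in> A}. if i0 = i then 1 else 0)"
    unfolding A1_def xR_powi mc_sum by (intro sum.cong) (auto simp: mc_mon)
  also have "\<dots> = 1" using f1 i0 by simp
  finally show False using z by simp
qed

definition ee :: "nat \<Rightarrow> R" where "ee j = yR ^ j + inverse yR ^ j"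

lemma ee_mon: "ee j = mon 0 0 (int j) + mon 0 0 (- int j)"
  by (simp add: ee_def yR_pow inverse_yR mon_pow)

lemma ee_0: "ee 0 = 2" by (simp add: ee_def)

lemma ee_rec: "ee 1 * ee (Suc j) = ee (Suc (Suc j)) + ee j"
  unfolding ee_mon by (simp add: algebra_simps mon_mult) (rule arg_cong[where f="mon 0 0"], simp)

lemma mc_ee_mult: "mc (ee j * r) k i l = mc r k i (l - int j) + mc r k i (l + int j)"
  unfolding ee_mon by (simp add: distrib_right mc_mon_mult)

lemma y0_lemma:
  fixes A :: "(int \<times> int) set" and s G :: "R fps"
  assumes fin: "finite A" and sym: "\<And>i j. (i, j) \<in> A \<Longrightarrow> (i, - j) \<in> A"
    and small: "\<And>i j. (i, j) \<in> A \<Longrightarrow> \<bar>j\<bar> \<le> 1"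
    and A1_ne: "\<exists>i. (i, 1) \<in> A"
    and s2: "s ^ 2 = deltax A" and s0: "s $ 0 = 1"
    and yV: "yfreeF (inverse s)" and yG: "yfreeF G"
  shows "mc ((G * inverse (Kxy A)) $ n) k i 0 = mc ((G * inverse s) $ n) k i 0"
proof -
  define a where "a = A0 A xR"
  define b where "b = A1 A xR"
  define L where "L = 1 - fps_X * fps_const a"
  define W where "W = fps_X * fps_const b"
  define V where "V = inverse s"
  define K where "K = Kxy A"
  have bne: "b \<noteq> 0" unfolding b_def by (rule A1_ne0[OF fin A1_ne])
  have Vs: "V * s = 1" unfolding V_def using s0 by (intro inverse_mult_eq_1) simp
  have KLW: "K = L - W * fps_const (ee 1)"
    unfolding K_def Kxy_def L_def W_def ee_def a_def b_def by (simp add: algebra_simps)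
  have K0: "K $ 0 = 1" unfolding KLW L_def W_def by simp
  have del: "deltax A = L ^ 2 - 4 * W ^ 2"
    unfolding deltax_def L_def W_def a_def b_def by (simp add: power_mult_distrib fps_const_power)
  have s1: "s $ 1 = - a"
  proof -
    have "(s ^ 2) $ 1 = 2 * s $ 1" using s0 by (simp add: power2_eq_square fps_mult_nth)
    moreover have "deltax A $ 1 = - (2 * a)" by (simp add: deltax_nth a_def)
    ultimately have "2 * s $ 1 = 2 * (- a)" using s2 by simp
    then show ?thesis by simp
  qed
  define T where "T = L - s"
  have T0: "T $ 0 = 0" unfolding T_def L_def using s0 by simp
  have T1: "T $ 1 = 0" unfolding T_def L_def using s1 by (simp add: fps_X_mult_nth)
  define Y where "Y = fps_shift 1 T * fps_const (inverse (2 * b))"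
  have Y0: "Y $ 0 = 0" unfolding Y_def using T1 by simp
  have TY: "T = 2 * W * Y"
  proof -
    have "2 * W * Y = fps_X * fps_shift 1 T * fps_const (2 * b * inverse (2 * b))"
      unfolding W_def Y_def by (simp add: numeral_fps_const algebra_simps)
    also have "2 * b * inverse (2 * b) = 1" using bne by simp
    finally show ?thesis using fps_X_shift[OF T0] by simp
  qed
  have sLY: "s = L - 2 * W * Y" by (subst TY[unfolded T_def, symmetric]) simp
  have Wne: "W \<noteq> 0"
  proof
    assume "W = 0"
    then have "W $ 1 = 0" by simp
    then show False unfolding W_def using bne by simp
  qed
  have quad: "L * Y = W * Y ^ 2 + W"
  proof -
    have "(L - 2 * W * Y) ^ 2 = L ^ 2 - 4 * W ^ 2" using s2 del sLY by simp
    then have "(4 * W) * (W * Y ^ 2 - L * Y + W) = 0"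
      by (simp add: algebra_simps power2_eq_square)
    moreover have "4 * W \<noteq> 0" using Wne by simp
    ultimately have "W * Y ^ 2 - L * Y + W = 0" by simp
    then show ?thesis by (simp add: algebra_simps)
  qed
  have Yrec: "Y = fps_X * (fps_const a * Y + fps_const b * Y ^ 2 + fps_const b)"
  proof -
    have "Y = L * Y + fps_X * fps_const a * Y" unfolding L_def by (simp add: algebra_simps)
    also have "\<dots> = W * Y ^ 2 + W + fps_X * fps_const a * Y" using quad by simp
    finally show ?thesis unfolding W_def by (simp add: algebra_simps)
  qed
  have ya: "yfreeR a" and yb: "yfreeR b" unfolding a_def b_def by (rule yfreeR_A01)+
  have yY: "yfreeF Y"
  proof -
    have "yfreeR (Y $ n)" for n
    proof (induction n rule: less_induct)
      case (less n)
      show ?case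
      proof (cases n)
        case 0 then show ?thesis using Y0 by (simp add: yfreeR_0)
      next
        case (Suc m)
        have "Y $ n = a * Y $ m + b * (Y * Y) $ m + (if m = 0 then b else 0)"
          unfolding Suc by (subst Yrec) (simp add: fps_X_mult_nth power2_eq_square)
        moreover have "yfreeR ((Y * Y) $ m)"
          by (rule yfree_coeff_mult) (use less Suc in auto)
        moreover have "yfreeR (Y $ m)" using less Suc by auto
        ultimately show ?thesis using ya yb by (auto intro!: yfreeR_add yfreeR_mult simp: yfreeR_0)
      qed
    qed
    then show ?thesis by (simp add: yfreeF_def)
  qed
  define WN where "WN N = V * (1 + (\<Sum>j\<in>{1..N}. fps_const (ee j) * Y ^ j))" for N
  have LV: "L * V = 1 + 2 * V * W * Y"
  proof -
    have "L * V = V * (L - 2 * W * Y) + 2 * V * W * Y" by (simp add: algebra_simps)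
    also have "V * (L - 2 * W * Y) = 1" using Vs sLY by simp
    finally show ?thesis .
  qed
  have IN: "K * WN N = 1 + V * W * (Y ^ (N + 1) * fps_const (ee N) - Y ^ N * fps_const (ee (Suc N)))" for N
  proof (induction N)
    case 0
    have "K * WN 0 = L * V - W * fps_const (ee 1) * V" unfolding WN_def KLW by (simp add: algebra_simps)
    also have "\<dots> = 1 + V * W * (Y ^ (0 + 1) * fps_const (ee 0) - Y ^ 0 * fps_const (ee (Suc 0)))"
      unfolding LV ee_0 by (simp add: algebra_simps numeral_fps_const)
    finally show ?case .
  next
    case (Suc N)
    have "WN (Suc N) = WN N + V * (fps_const (ee (Suc N)) * Y ^ (Suc N))"
      unfolding WN_def by (simp add: algebra_simps)
    then have "K * WN (Suc N) = K * WN N + (L - W * fps_const (ee 1)) * (V * (fps_const (ee (Suc N)) * Y ^ (N + 1)))"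
      unfolding KLW by (simp add: algebra_simps)
    also have "\<dots> = 1 + V * W * (Y ^ (N + 2) * fps_const (ee (Suc N)) - Y ^ (N + 1) * fps_const (ee (Suc (Suc N))))"
      unfolding Suc.IH
      by (rule step_alg[OF quad]) (simp add: ee_rec[of N, symmetric])
    finally show ?case by simp
  qed
  have KiK: "inverse K * K = 1" using K0 by (intro inverse_mult_eq_1) simp
  define Y1 where "Y1 = fps_shift 1 Y"
  have YY1: "Y = fps_X * Y1" unfolding Y1_def using fps_X_shift[OF Y0] by simp
  have err: "WN N = inverse K + fps_X ^ (Suc N) * (inverse K * (V * fps_const b * Y1 ^ N * (Y * fps_const (ee N) - fps_const (ee (Suc N)))))" for N
  proof -
    have e: "V * W * (Y ^ (N + 1) * fps_const (ee N) - Y ^ N * fps_const (ee (Suc N)))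
      = fps_X ^ (Suc N) * (V * fps_const b * Y1 ^ N * (Y * fps_const (ee N) - fps_const (ee (Suc N))))"
    proof -
      have yN: "Y ^ N = fps_X ^ N * Y1 ^ N" by (subst YY1) (simp add: power_mult_distrib)
      have "V * W * (Y ^ (N + 1) * fps_const (ee N) - Y ^ N * fps_const (ee (Suc N)))
          = V * W * Y ^ N * (Y * fps_const (ee N) - fps_const (ee (Suc N)))" by (simp add: algebra_simps)
      also have "\<dots> = fps_X ^ (Suc N) * (V * fps_const b * Y1 ^ N * (Y * fps_const (ee N) - fps_const (ee (Suc N))))"
        unfolding yN W_def by (simp add: algebra_simps)
      finally show ?thesis .
    qed
    have "WN N = inverse K * (K * WN N)" using KiK by (simp add: mult.assoc[symmetric])
    also have "\<dots> = inverse K + inverse K * (fps_X ^ (Suc N) * (V * fps_const b * Y1 ^ N * (Y * fps_const (ee N) - fps_const (ee (Suc N)))))"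
      unfolding IN e by (simp add: algebra_simps)
    finally show ?thesis by (simp add: algebra_simps)
  qed
  define Z where "Z = inverse K * (V * fps_const b * Y1 ^ n * (Y * fps_const (ee n) - fps_const (ee (Suc n))))"
  have "(G * inverse K) $ n = (G * WN n) $ n"
  proof -
    have "G * WN n = G * inverse K + fps_X ^ (Suc n) * (G * Z)"
      unfolding err[of n] Z_def by (simp add: algebra_simps)
    moreover have "(fps_X ^ (Suc n) * (G * Z)) $ n = 0"
      by (simp only: fps_X_power_mult_nth) simp
    ultimately show ?thesis by simp
  qed
  also have "G * WN n = G * V + (\<Sum>j\<in>{1..n}. fps_const (ee j) * (G * V * Y ^ j))"
    unfolding WN_def by (simp add: algebra_simps sum_distrib_left)
  finally have eq: "(G * inverse K) $ n = (G * V) $ n + (\<Sum>j\<in>{1..n}. ee j * (G * V * Y ^ j) $ n)"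
    by (simp add: fps_sum_nth)
  have z: "mc (ee j * (G * V * Y ^ j) $ n) k i 0 = 0" if "j \<in> {1..n}" for j
  proof -
    have yf: "yfreeF (G * V * Y ^ j)" using yG yV yY unfolding V_def by (intro yfreeF_mult yfreeF_pow)
    then have "yfreeR ((G * V * Y ^ j) $ n)" by (simp add: yfreeF_def)
    then have "mc ((G * V * Y ^ j) $ n) k i l = 0" if "l \<noteq> 0" for l
      using that unfolding yfreeR_def spR_def by blast
    then show ?thesis using that by (simp add: mc_ee_mult)
  qed
  show ?thesis unfolding K_def[symmetric] V_def[symmetric] eq
    by (simp add: mc_sum z)
qed


definition qR :: R where "qR = zR * xR / (1 - zR * xR)"

lemma zx_mon: "zR * xR = mon 1 1 0"
  by (simp add: mon_def)

lemma one_minus_zx_ne: "1 - zR * xR \<noteq> 0"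
proof
  assume "1 - zR * xR = 0"
  then have "mc (1 - zR * xR) 0 0 0 = 0" by simp
  then show False by (simp add: zx_mon mc_one mc_mon)
qed

definition qq :: R where "qq = fps_to_fls (Abs_fps (\<lambda>k. if k = 0 then 0 else xM ^ k))"

lemma mc_qq: "mc qq k i j = (if 1 \<le> k \<and> i = k \<and> j = 0 then 1 else 0)"
  by (auto simp: qq_def mc_def xM_def)

lemma qR_eq: "qR = qq"
proof -
  have "qq * (1 - zR * xR) = zR * xR"
  proof (rule mc_eqI)
    fix k i j
    have "qq * (1 - zR * xR) = qq - mon 1 1 0 * qq" unfolding zx_mon by (simp add: algebra_simps)
    then show "mc (qq * (1 - zR * xR)) k i j = mc (zR * xR) k i j"
      unfolding zx_mon by (simp add: mc_mon_mult mc_qq mc_mon)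
  qed
  then show ?thesis unfolding qR_def using one_minus_zx_ne
    by (metis nonzero_mult_div_cancel_right)
qed

lemma spR_qR: "spR qR (\<lambda>k i j. k = i \<and> 1 \<le> i \<and> j = 0)"
  unfolding spR_def qR_eq mc_qq by auto

lemma qR_xb_z: "qR * (inverse xR - zR) = zR"
proof -
  have zm: "zR = mon 1 0 0" by (simp add: mon_def)
  have "inverse xR - zR = inverse xR * (1 - zR * xR)"
  proof -
    have xm: "xR = mon 0 1 0" by (simp add: mon_def)
    show ?thesis unfolding xm zm inverse_mon by (simp add: right_diff_distrib mon_mult)
  qed
  then have "qR * (inverse xR - zR) = zR * xR * inverse xR"
    unfolding qR_def using one_minus_zx_ne by simp
  also have "\<dots> = zR" by (metis mult.assoc mult.right_neutral right_inverse xR_ne0)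
  finally show ?thesis .
qed

lemma qR_diff: "qR * (inverse xR ^ l - zR ^ l) = (\<Sum>t<l. mon (int l - int t) (- int t) 0)"
proof -
  have "qR * (inverse xR ^ l - zR ^ l) = qR * (inverse xR - zR) * (\<Sum>t<l. zR ^ (l - Suc t) * inverse xR ^ t)"
    by (simp add: power_diff_sumr2 mult.assoc)
  also have "\<dots> = (\<Sum>t<l. zR * (zR ^ (l - Suc t) * inverse xR ^ t))"
    by (simp add: qR_xb_z sum_distrib_left)
  also have "\<dots> = (\<Sum>t<l. mon (int l - int t) (- int t) 0)"
  proof (intro sum.cong refl)
    fix t assume "t \<in> {..<l}"
    then have "1 + int (l - Suc t) = int l - int t" by auto
    have zm: "zR = mon 1 0 0" by (simp add: mon_def)
    have "zR * (zR ^ (l - Suc t) * inverse xR ^ t) = mon (1 + int (l - Suc t)) (- int t) 0"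
      by (subst (1) zm) (simp only: zR_pow xb_pow mon_mult, simp)
    then show "zR * (zR ^ (l - Suc t) * inverse xR ^ t) = mon (int l - int t) (- int t) 0"
      using \<open>1 + int (l - Suc t) = int l - int t\<close> by simp
  qed
  finally show ?thesis .
qed

lemma spF_mult':
  assumes "spF F P" "spF G Q"
    and "\<And>n k i j n1 k1 i1 j1. n1 \<le> n \<Longrightarrow> P n1 k1 i1 j1 \<Longrightarrow> Q (n - n1) (k - k1) (i - i1) (j - j1) \<Longrightarrow> Rr n k i j"
  shows "spF (F * G) Rr"
  by (rule spF_mono[OF spF_mult[OF assms(1,2)]]) (auto simp: fsum_def psum_def intro: assms(3))

lemma spF_mc: "spF F P \<Longrightarrow> \<not> P n k i j \<Longrightarrow> mc (F $ n) k i j = 0"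
  unfolding spF_def spR_def by blast

lemma pev_diff_sum: "pev p X - pev p Y = (\<Sum>l\<le>degree p. cR (coeff p l) * (X ^ l - Y ^ l))"
  unfolding pev_def by (simp add: sum_subtractf right_diff_distrib)

lemma spF_q_diff: "spF (fps_const qR * (fev P (inverse xR) - fev P zR)) (\<lambda>n k i j. j = 0 \<and> i \<le> 0)"
  unfolding spF_def
proof
  fix n
  have "(fps_const qR * (fev P (inverse xR) - fev P zR)) $ n
      = (\<Sum>l\<le>degree (P $ n). cR (coeff (P $ n) l) * (\<Sum>t<l. mon (int l - int t) (- int t) 0))"
  proof -
    have "(fps_const qR * (fev P (inverse xR) - fev P zR)) $ n = qR * (pev (P $ n) (inverse xR) - pev (P $ n) zR)"
      by simp
    also have "\<dots> = qR * (\<Sum>l\<le>degree (P $ n). cR (coeff (P $ n) l) * (inverse xR ^ l - zR ^ l))"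
      by (simp only: pev_diff_sum)
    also have "\<dots> = (\<Sum>l\<le>degree (P $ n). cR (coeff (P $ n) l) * (qR * (inverse xR ^ l - zR ^ l)))"
      by (simp add: sum_distrib_left mult.left_commute)
    finally show ?thesis by (simp only: qR_diff)
  qed
  moreover have "spR (\<Sum>l\<le>degree (P $ n). cR (coeff (P $ n) l) * (\<Sum>t<l. mon (int l - int t) (- int t) 0))
      (\<lambda>k i j. j = 0 \<and> i \<le> 0)"
    by (intro spR_sum spR_cR_mult spR_mono[OF spR_mon]) auto
  ultimately show "spR ((fps_const qR * (fev P (inverse xR) - fev P zR)) $ n) (\<lambda>k i j. j = 0 \<and> i \<le> 0)"
    by simp
qed

theorem mainTheorem14:
  fixes A :: "(int \<times> int) set"
    and D :: "real fps" and Del Delb :: "real poly fps"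
  assumes fin: "finite A"
    and sym: "\<And>i j. (i, j) \<in> A \<Longrightarrow> (i, - j) \<in> A"
    and small: "\<And>i j. (i, j) \<in> A \<Longrightarrow> \<bar>j\<bar> \<le> 1"
    and A1_ne: "\<exists>i. (i, 1) \<in> A"
    and rev: "\<And>i j. (i, j) \<in> A \<Longrightarrow> (- i, - j) \<in> A"
    and cf: "canon_fact A D Del Delb"
  shows "Splus A = fps_const (zR * xR / (1 - zR * xR)) * inverse (Kxy A)
                   * fps_sqrt1 (fev Del (inverse xR) * inverse (fev Del zR))
       \<and> Splus A = fps_const (zR * xR / (1 - zR * xR)) * S0z A * Sk A 0
                   * inverse (fps_sqrt1 (liftR D))"
proof -
  have dl: "deltax A = liftR D * fev Del xR * fev Delb (inverse xR)" and D0: "D $ 0 = 1"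
    and nDel: "normal Del" and Del0: "Del $ 0 = 1"
    using cf unfolding canon_fact_def normal_def by auto
  have DD: "Delb = Del" by (rule Delb_eq_Del[OF fin sym rev cf])
  define g where "g = psq Del"
  define h where "h = pinv g"
  have g0: "g $ 0 = 1" and g2: "g ^ 2 = Del" using psq_props[OF Del0] by (simp_all add: g_def)
  have ng: "normal g" unfolding g_def by (rule psq_normal[OF Del0 nDel])
  have gh: "g * h = 1" and h0: "h $ 0 = 1" using pinv_props[OF g0] by (simp_all add: h_def)
  have nh: "normal h" unfolding h_def by (rule pinv_normal[OF g0 ng])
  have fevh: "fev h X = inverse (fev g X)" for X unfolding h_def by (rule fev_inverse[OF g0])
  have PH: "fev g X * fev h X = 1" for X by (metis fev_mult fev_1 gh)
  have fev_g2: "fev g X ^ 2 = fev Del X" for X by (metis fev_mult g2 power2_eq_square)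
  define sD where "sD = rsq D"
  have sD2: "sD ^ 2 = D" and sD0: "sD $ 0 = 1" using rsq_props[OF D0] by (simp_all add: sD_def)
  define iD where "iD = inverse sD"
  have liD: "liftR sD * liftR iD = 1"
    unfolding iD_def using sD0 by (metis liftR_1 liftR_mult inverse_mult_eq_1' one_neq_zero)
  define Px where "Px = fev g xR"
  define Pb where "Pb = fev g (inverse xR)"
  define Pz where "Pz = fev g zR"
  define Hx where "Hx = fev h xR"
  define Hb where "Hb = fev h (inverse xR)"
  define Hz where "Hz = fev h zR"
  define K where "K = Kxy A"
  have Kalt: "K = 1 - fps_X * fps_const (stepR A)" unfolding K_def by (rule Kxy_alt[OF fin sym small])
  have K0: "K $ 0 = 1" unfolding Kalt by simp
  have KiK: "K * inverse K = 1" using K0 by (intro inverse_mult_eq_1') simp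
  have iK0: "inverse K $ 0 = 1" using K0 by simp
  define s where "s = liftR sD * Px * Pb"
  have s2: "s ^ 2 = deltax A"
  proof -
    have "s ^ 2 = liftR (sD ^ 2) * Px ^ 2 * Pb ^ 2"
      unfolding s_def by (simp add: power_mult_distrib power2_eq_square liftR_mult)
    also have "\<dots> = deltax A" unfolding Px_def Pb_def fev_g2 sD2 dl DD ..
    finally show ?thesis .
  qed
  have s0: "s $ 0 = 1" unfolding s_def Px_def Pb_def using sD0 g0 by simp
  have invs: "inverse s = liftR iD * Hx * Hb"
  proof (rule fps_inverse_unique)
    have "s * (liftR iD * Hx * Hb) = (liftR sD * liftR iD) * (Px * Hx) * (Pb * Hb)"
      unfolding s_def by (simp add: ac_simps)
    then show "s * (liftR iD * Hx * Hb) = 1" by (simp add: liD PH Px_def Hx_def Pb_def Hb_def)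
  qed
  have spL: "spF (liftR F) (\<lambda>n k i j. k = 0 \<and> i = 0 \<and> j = 0)" for F by (rule spF_liftR)
  have spPb: "spF Pb (\<lambda>n k i j. k = 0 \<and> j = 0 \<and> i \<le> 0)" unfolding Pb_def by (rule spF_fev_xb)
  have spHb: "spF Hb (\<lambda>n k i j. k = 0 \<and> j = 0 \<and> i \<le> 0)" unfolding Hb_def by (rule spF_fev_xb)
  have spPx: "spF Px (\<lambda>n k i j. k = 0 \<and> j = 0 \<and> 0 \<le> i)" unfolding Px_def by (rule spF_fev_x)
  have spHx: "spF Hx (\<lambda>n k i j. k = 0 \<and> j = 0 \<and> 0 \<le> i \<and> (n \<noteq> 0 \<longrightarrow> 0 < i))"
    unfolding Hx_def by (rule spF_fev_x_normal[OF nh])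
  have spHz: "spF Hz (\<lambda>n k i j. i = 0 \<and> j = 0 \<and> 0 \<le> k)" unfolding Hz_def by (rule spF_fev_z)
  have spq: "spF (fps_const qR) (\<lambda>n k i j. n = 0 \<and> k = i \<and> 1 \<le> i \<and> j = 0)"
    by (rule spF_const[OF spR_qR])
  have yinvs: "yfreeF (inverse s)"
  proof -
    have "spF (liftR iD * Hx) (\<lambda>n k i j. j = 0)" by (rule spF_mult'[OF spL spHx]) auto
    then have "spF (liftR iD * Hx * Hb) (\<lambda>n k i j. j = 0)" by (rule spF_mult'[OF _ spHb]) auto
    then show ?thesis unfolding invs by (rule yfreeF_spF)
  qed
  have y0: "mc ((G * inverse (Kxy A)) $ n) k i 0 = mc ((G * inverse s) $ n) k i 0"
    if "yfreeF G" for G n k i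
  proof (rule y0_lemma)
    show "finite A" by (rule fin)
    show "(i, - j) \<in> A" if "(i, j) \<in> A" for i j using sym that .
    show "\<bar>j\<bar> \<le> 1" if "(i, j) \<in> A" for i j using small that .
    show "\<exists>i. (i, 1) \<in> A" by (rule A1_ne)
    show "s ^ 2 = deltax A" by (rule s2)
    show "s $ 0 = 1" by (rule s0)
    show "yfreeF (inverse s)" by (rule yinvs)
    show "yfreeF G" by (rule that)
  qed
  define Sst where "Sst = liftR sD * Pb * inverse K"
  have spLPb: "spF (liftR sD * Pb) (\<lambda>n k i j. j = 0 \<and> i \<le> 0)"
    by (rule spF_mult'[OF spL spPb]) auto
  have GS: "liftR sD * Pb * inverse s = Hx"
  proof -
    have "liftR sD * Pb * inverse s = (liftR sD * liftR iD) * (Pb * Hb) * Hx"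
      unfolding invs by (simp add: ac_simps)
    then show ?thesis by (simp add: liD PH Pb_def Hb_def)
  qed
  have ySP: "yfreeF (liftR sD * Pb)" by (rule yfreeF_spF[OF spF_mono[OF spLPb]]) simp
  have Sst_y0: "mc (Sst $ n) k i 0 = mc (Hx $ n) k i 0" for n k i
  proof -
    have "mc (Sst $ n) k i 0 = mc ((liftR sD * Pb * inverse s) $ n) k i 0"
      unfolding Sst_def K_def by (rule y0[OF ySP])
    then show ?thesis using GS by simp
  qed
  have SkS: "Sk A 0 = Sst"
    unfolding Kalt[symmetric]
  proof (rule uniq[of "Sk A 0" Sst "stepR A", folded Kalt])
    show "Sk A 0 $ 0 = Sst $ 0" using Sk0_0[OF fin] sD0 g0 iK0 by (simp add: Sst_def Pb_def)
    show "j = 0 \<and> i \<le> 0" if "n \<ge> 1" "mc ((K * Sk A 0) $ n) k i j \<noteq> 0" for n k i j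
      using Sk0_conds(1)[OF fin that(1)] that(2) unfolding Kalt by blast
    show "j = 0 \<and> i \<le> 0" if "n \<ge> 1" "mc ((K * Sst) $ n) k i j \<noteq> 0" for n k i j
    proof -
      have "K * Sst = liftR sD * Pb" unfolding Sst_def using KiK by (simp add: ac_simps)
      then show ?thesis using spF_mc[OF spLPb, where n=n and k=k and i=i and j=j] that(2) by auto
    qed
    show "mc (Sk A 0 $ n) k i 0 = 0" if "n \<ge> 1" "i \<le> 0" for n k i
      using Sk0_conds(2)[OF fin that] .
    show "mc (Sst $ n) k i 0 = 0" if "n \<ge> 1" "i \<le> 0" for n k i
      using Sst_y0[of n k i] spF_mc[OF spHx, where n=n and k=k and i=i and j=0] that by auto
  qed
  have S0: "S0z A = Hz"
  proof (rule fps_ext, rule mc_eqI)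
    fix n k i j
    have "real (acount A 0 k 0 n) = mc (Sk A 0 $ n) 0 k 0" by (simp add: mc_Sk fin)
    also have "\<dots> = mc (Hx $ n) 0 k 0" unfolding SkS by (rule Sst_y0)
    finally have "real (acount A 0 k 0 n) = (if 0 \<le> k then coeff (h $ n) (nat k) else 0)"
      by (simp add: Hx_def mc_pev_x)
    then show "mc (S0z A $ n) k i j = mc (Hz $ n) k i j"
      by (simp add: mc_S0z fin Hz_def mc_pev_z)
  qed
  define F1 where "F1 = fps_const qR * inverse K * (Pb * Hz)"
  define G where "G = fps_const qR * Pb * Hz"
  have F1G: "F1 = G * inverse K" unfolding F1_def G_def by (simp add: ac_simps)
  have spG: "spF G (\<lambda>n k i j. j = 0)"
  proof -
    have "spF (fps_const qR * Pb) (\<lambda>n k i j. j = 0)" by (rule spF_mult'[OF spq spPb]) auto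
    then show ?thesis unfolding G_def by (rule spF_mult'[OF _ spHz]) auto
  qed
  have GV: "G * inverse s = fps_const qR * Hz * Hx * liftR iD"
  proof -
    have "G * inverse s = fps_const qR * Hz * Hx * liftR iD * (Pb * Hb)"
      unfolding G_def invs by (simp add: ac_simps)
    then show ?thesis by (simp add: PH Pb_def Hb_def)
  qed
  have spGV: "spF (G * inverse s) (\<lambda>n k i j. 1 \<le> i)"
  proof -
    have "spF (fps_const qR * Hz) (\<lambda>n k i j. 1 \<le> i)" by (rule spF_mult'[OF spq spHz]) auto
    then have "spF (fps_const qR * Hz * Hx) (\<lambda>n k i j. 1 \<le> i)" by (rule spF_mult'[OF _ spHx]) auto
    then have "spF (fps_const qR * Hz * Hx * liftR iD) (\<lambda>n k i j. 1 \<le> i)" by (rule spF_mult'[OF _ spL]) auto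
    then show ?thesis unfolding GV .
  qed
  have SpF1: "Splus A = F1"
  proof (rule uniq[of "Splus A" F1 "stepR A", folded Kalt])
    show "Splus A $ 0 = F1 $ 0"
    proof (rule mc_eqI)
      fix k i j
      have "F1 $ 0 = qR" unfolding F1_def Pb_def Hz_def using iK0 g0 h0 by simp
      then show "mc (Splus A $ 0) k i j = mc (F1 $ 0) k i j"
        by (simp add: Splus_0[OF fin] qR_eq mc_qq)
    qed
    show "j = 0 \<and> i \<le> 0" if "n \<ge> 1" "mc ((K * Splus A) $ n) k i j \<noteq> 0" for n k i j
      using Splus_conds(1)[OF fin that(1)] that(2) unfolding Kalt by blast
    show "j = 0 \<and> i \<le> 0" if n1: "n \<ge> 1" and nz: "mc ((K * F1) $ n) k i j \<noteq> 0" for n k i j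
    proof -
      have "K * F1 = fps_const qR * (Pb * Hz)" unfolding F1_def using KiK by (simp add: ac_simps)
      also have "Pb * Hz = (Pb - Pz) * Hz + 1"
        using PH[of zR] by (simp add: algebra_simps Pz_def Hz_def)
      finally have "K * F1 = fps_const qR * (Pb - Pz) * Hz + fps_const qR"
        by (simp add: algebra_simps)
      then have "(K * F1) $ n = (fps_const qR * (Pb - Pz) * Hz) $ n" using n1 by simp
      moreover have "spF (fps_const qR * (Pb - Pz) * Hz) (\<lambda>n k i j. j = 0 \<and> i \<le> 0)"
        by (rule spF_mult'[OF spF_q_diff[of g, folded Pb_def Pz_def] spHz]) auto
      ultimately show ?thesis using spF_mc[of "fps_const qR * (Pb - Pz) * Hz" _ n k i j] nz by auto
    qed
    show "mc (Splus A $ n) k i 0 = 0" if "n \<ge> 1" "i \<le> 0" for n k i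
      using Splus_conds(2)[OF fin that] .
    show "mc (F1 $ n) k i 0 = 0" if "n \<ge> 1" "i \<le> 0" for n k i
    proof -
      have "mc (F1 $ n) k i 0 = mc ((G * inverse s) $ n) k i 0"
        unfolding F1G K_def using y0[OF yfreeF_spF[OF spG]] .
      also have "\<dots> = 0" using spF_mc[OF spGV, where n=n and k=k and i=i and j=0] that by simp
      finally show ?thesis .
    qed
  qed
  have sq1: "fps_sqrt1 (fev Del (inverse xR) * inverse (fev Del zR)) = Pb * Hz"
  proof (rule fps_sqrt1_eq)
    show "(Pb * Hz) ^ 2 = fev Del (inverse xR) * inverse (fev Del zR)"
      unfolding Pb_def Hz_def fevh power_mult_distrib fev_g2 fps_inverse_power[symmetric] ..
    show "(Pb * Hz) $ 0 = 1" unfolding Pb_def Hz_def using g0 h0 by simp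
  qed
  have sq2: "fps_sqrt1 (liftR D) = liftR sD"
    by (rule fps_sqrt1_eq) (simp_all add: sD0 sD2[symmetric] power2_eq_square liftR_mult)
  have liD': "liftR sD * inverse (liftR sD) = 1" using sD0 by (intro inverse_mult_eq_1') simp
  show ?thesis
  proof
    show "Splus A = fps_const (zR * xR / (1 - zR * xR)) * inverse (Kxy A)
                   * fps_sqrt1 (fev Del (inverse xR) * inverse (fev Del zR))"
      unfolding sq1 SpF1 F1_def K_def qR_def ..
    have "fps_const qR * S0z A * Sk A 0 * inverse (liftR sD) = F1 * (liftR sD * inverse (liftR sD))"
      unfolding S0 SkS Sst_def F1_def by (simp add: ac_simps)
    then show "Splus A = fps_const (zR * xR / (1 - zR * xR)) * S0z A * Sk A 0
                   * inverse (fps_sqrt1 (liftR D))"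
      unfolding sq2 SpF1 liD' qR_def by simp
  qed
qed


end
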